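(* Consider three unit point masses in $\mathbb{R}^2$ with positions $q_i=(x_i,z_i)$, configuration space $Q=\{q\in\mathbb{R}^6: q_i\neq q_j\ (i\neq j)\}$, total potential $U=\frac{\kappa_s}{2}\sum_{k}(\ell_k-\bar\ell_k)^2+\kappa_{\mathrm{np}}\sum_i\chi(z_i)+\sum_i z_i$ with reduced potential $\hat U$ on $Q/\mathbb{R}$, and total Rayleigh dissipation function $R=R_{\mathrm{shape}}+R_{\mathrm{ns}}+R_{\mathrm{db}}$ on $TQ$ given by $$R_{\mathrm{shape}}=\frac{\nu_s}{2}\sum_{k=1}^3\dot\ell_k^2,\quad R_{\mathrm{ns}}=-\frac{\nu_{\mathrm{ns}}}{2}\sum_{i=1}^3\chi'(z_i)\dot x_i^2,\quad R_{\mathrm{db}}=\frac{\nu_{\mathrm{db}}}{2}\sum_{i=1}^3\chi(z_i)\dot z_i^2,$$ with $\nu_s,\nu_{\mathrm{ns}},\nu_{\mathrm{db}}>0$. Assume the rest lengths $\bar\ell_1,\bar\ell_2,\bar\ell_3$ form a non-degenerate triangle and $\kappa_s,\kappa_{\mathrm{np}}>0$ are sufficiently large. Then there is a non-degenerate local minimum $\hat q_*$ of $\hat U$ (positive definite Hessian) such that $R(q,\cdot)$ is a positive definite quadratic form on $T_qQ$ for every $q\in Q$ with $\pi(q)=\hat q_*$ (i.e. on the fiber of $TQ/\mathbb{R}$ above $\hat q_*$).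
   Context: $\ell_k=\|q_i-q_j\|$ for $\{i,j,k\}=\{1,2,3\}$; $\chi(s)=\tfrac12 s^2$ for $s<0$, $0$ otherwise (so $\chi'\le0$). $\pi:Q\to Q/\mathbb{R}$ is the quotient by simultaneous translation of all $x_i$. The Rayleigh function $R$ generates the friction force via $F=-\partial R/\partial u$ (fiber derivative). $R$ is invariant under the translation action, so it is defined on the fibers of $TQ/\mathbb{R}$. *)

theory Defs
  imports "HOL-Analysis.Analysis"
begin

text \<open>A configuration is a pair (x, z) of
  vectors in real^3: q_i = (x $ i, z $ i), for i = 1, 2, 3.
  A tangent vector (velocity) at a configuration is likewise a pair (xdot, zdot).\<close>

type_synonym config = "(real^3) \<times> (real^3)"

definition pos :: "config \<Rightarrow> 3 \<Rightarrow> real \<times> real" where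
  "pos q i = (fst q $ i, snd q $ i)"

definition Qspace :: "config set" where
  "Qspace = {q. \<forall>i j. i \<noteq> j \<longrightarrow> pos q i \<noteq> pos q j}"

definition edge_ends :: "3 \<Rightarrow> 3 \<times> 3" where
  "edge_ends k = (if k = 1 then (2, 3) else if k = 2 then (1, 3) else (1, 2))"

definition ell :: "config \<Rightarrow> 3 \<Rightarrow> real" where
  "ell q k = norm (pos q (fst (edge_ends k)) - pos q (snd (edge_ends k)))"

text \<open>Time derivative of ell_k along the velocity v (derivative of the norm).\<close>
definition ell_dot :: "config \<Rightarrow> config \<Rightarrow> 3 \<Rightarrow> real" where
  "ell_dot q v k = (let (i, j) = edge_ends k in
      ((pos q i - pos q j) \<bullet> (pos v i - pos v j)) / norm (pos q i - pos q j))"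

definition chi :: "real \<Rightarrow> real" where
  "chi s = (if s < 0 then s^2 / 2 else 0)"

definition U :: "real \<Rightarrow> real \<Rightarrow> (3 \<Rightarrow> real) \<Rightarrow> config \<Rightarrow> real" where
  "U \<kappa>s \<kappa>np lbar q =
     \<kappa>s / 2 * (\<Sum>k\<in>UNIV. (ell q k - lbar k)^2)
     + \<kappa>np * (\<Sum>i\<in>UNIV. chi (snd q $ i))
     + (\<Sum>i\<in>UNIV. snd q $ i)"

definition R_shape :: "real \<Rightarrow> config \<Rightarrow> config \<Rightarrow> real" where
  "R_shape \<nu>s q v = \<nu>s / 2 * (\<Sum>k\<in>UNIV. (ell_dot q v k)^2)"

definition R_ns :: "real \<Rightarrow> config \<Rightarrow> config \<Rightarrow> real" where
  "R_ns \<nu>ns q v = - \<nu>ns / 2 * (\<Sum>i\<in>UNIV. deriv chi (snd q $ i) * (fst v $ i)^2)"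

definition R_db :: "real \<Rightarrow> config \<Rightarrow> config \<Rightarrow> real" where
  "R_db \<nu>db q v = \<nu>db / 2 * (\<Sum>i\<in>UNIV. chi (snd q $ i) * (snd v $ i)^2)"

definition R_total :: "real \<Rightarrow> real \<Rightarrow> real \<Rightarrow> config \<Rightarrow> config \<Rightarrow> real" where
  "R_total \<nu>s \<nu>ns \<nu>db q v = R_shape \<nu>s q v + R_ns \<nu>ns q v + R_db \<nu>db q v"

text \<open>The quotient Q/R by simultaneous translation of the x_i, identified with an
  open subset of R^5 through the global coordinates (x_2 - x_1, x_3 - x_1, z).
  (These coordinates are constant exactly on translation orbits.)\<close>
type_synonym redconfig = "(real \<times> real) \<times> (real^3)"

definition proj :: "config \<Rightarrow> redconfig" where
  "proj q = ((fst q $ 2 - fst q $ 1, fst q $ 3 - fst q $ 1), snd q)"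

definition Qred :: "redconfig set" where
  "Qred = proj ` Qspace"

text \<open>Reduced potential: Uhat (proj q) = U q (U is translation invariant), obtained via
  the section x_1 = 0.\<close>
definition lift_section :: "redconfig \<Rightarrow> config" where
  "lift_section p = (vector [0, fst (fst p), snd (fst p)], snd p)"

definition Uhat :: "real \<Rightarrow> real \<Rightarrow> (3 \<Rightarrow> real) \<Rightarrow> redconfig \<Rightarrow> real" where
  "Uhat \<kappa>s \<kappa>np lbar p = U \<kappa>s \<kappa>np lbar (lift_section p)"

definition nondeg_local_min :: "('a::euclidean_space \<Rightarrow> real) \<Rightarrow> 'a set \<Rightarrow> 'a \<Rightarrow> bool" where
  "nondeg_local_min f D p \<longleftrightarrow> p \<in> D \<and>
     (\<exists>S g H. open S \<and> p \<in> S \<and> S \<subseteq> D \<and>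
        (\<forall>y\<in>S. (f has_derivative (\<lambda>h. g y \<bullet> h)) (at y)) \<and>
        (g has_derivative H) (at p) \<and>
        g p = 0 \<and>
        (\<forall>h. h \<noteq> 0 \<longrightarrow> h \<bullet> H h > 0) \<and>
        (\<forall>y\<in>S. f p \<le> f y))"

end

theory Submission
  imports Defs
begin


lemma UNIV3_dist: "distinct [i,j,k::3] \<Longrightarrow> (UNIV::3 set) = {i,j,k}"
  using exhaust_3[of i] exhaust_3[of j] exhaust_3[of k] UNIV_3 by auto

lemma sum3_dist: "distinct [i,j,k::3] \<Longrightarrow> (\<Sum>v\<in>UNIV. f v) = f i + f j + (f k::real)"
  by (simp add: UNIV3_dist)

lemma edge_roles: "distinct [i,j,k::3] \<Longrightarrow> edge_ends k = (i,j) \<or> edge_ends k = (j,i)"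
  using exhaust_3[of i] exhaust_3[of j] exhaust_3[of k] by (auto simp: edge_ends_def)

definition dp :: "config \<Rightarrow> 3 \<Rightarrow> real \<times> real" where
  "dp q e = pos q (fst (edge_ends e)) - pos q (snd (edge_ends e))"

lemma ell_dp: "ell q e = norm (dp q e)"
  by (simp add: ell_def dp_def)

lemma dp_inner_role: "distinct [i,j,k::3] \<Longrightarrow>
   dp q k \<bullet> dp w k = (pos q i - pos q j) \<bullet> (pos w i - pos w j)"
  using edge_roles[of i j k] unfolding dp_def
  by (auto simp: inner_diff_left inner_diff_right)

lemma dp_norm_role: "distinct [i,j,k::3] \<Longrightarrow> norm (dp q k) = norm (pos q i - pos q j)"
  using edge_roles[of i j k] unfolding dp_def
  by (auto simp: norm_minus_commute)

lemma chi_alt: "chi x = (min x 0)^2 / 2"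
  by (simp add: chi_def min_def)

lemma chi_deriv: "(chi has_real_derivative min s 0) (at s)"
proof -
  have "((\<lambda>h. (chi (s + h) - chi s) / h) \<longlongrightarrow> min s 0) (at 0)"
  proof (cases "s = 0")
    case True
    have e: "\<forall>\<^sub>F h in at (0::real). (chi (s + h) - chi s) / h = min h 0 / 2"
      by (auto simp: True chi_def eventually_at_filter min_def power2_eq_square)
    have "((\<lambda>h::real. min h 0 / 2) \<longlongrightarrow> min 0 0 / 2) (at 0)"
      by (intro tendsto_intros) auto
    then have "((\<lambda>h::real. min h 0 / 2) \<longlongrightarrow> 0) (at 0)" by simp
    then have "((\<lambda>h. (chi (s + h) - chi s) / h) \<longlongrightarrow> 0) (at 0)"
      by (rule Lim_transform_eventually) (use e in \<open>auto elim: eventually_mono\<close>)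
    then show ?thesis using True by simp
  next
    case False
    show ?thesis
    proof (cases "s < 0")
      case True
      have e: "\<forall>\<^sub>F h in at (0::real). (chi (s + h) - chi s) / h = s + h/2"
      proof -
        have "\<forall>\<^sub>F h in nhds (0::real). h \<in> {..< -s}"
          by (rule eventually_nhds_in_open) (use True in auto)
        then have "\<forall>\<^sub>F h in nhds (0::real). h < - s" by simp
        then have "\<forall>\<^sub>F h in at (0::real). h < - s \<and> h \<noteq> 0"
          by (auto simp: eventually_at_filter elim: eventually_mono)
        then show ?thesis
          by eventually_elim (use True in \<open>auto simp: chi_def field_simps power2_eq_square\<close>)
      qed
      have "((\<lambda>h::real. s + h/2) \<longlongrightarrow> s + 0/2) (at 0)" by (intro tendsto_intros) auto
      then show ?thesis using e True by (simp add: tendsto_cong min_def)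
    next
      case F2: False
      then have sp: "s > 0" using False by simp
      have e: "\<forall>\<^sub>F h in at (0::real). (chi (s + h) - chi s) / h = 0"
      proof -
        have "\<forall>\<^sub>F h in nhds (0::real). h \<in> {- s<..}"
          by (rule eventually_nhds_in_open) (use sp in auto)
        then have "\<forall>\<^sub>F h in nhds (0::real). h > - s" by simp
        then have "\<forall>\<^sub>F h in at (0::real). h > - s"
          by (auto simp: eventually_at_filter elim: eventually_mono)
        then show ?thesis
          by eventually_elim (use sp in \<open>auto simp: chi_def\<close>)
      qed
      have "((\<lambda>h. (chi (s + h) - chi s) / h) \<longlongrightarrow> 0) (at 0)"
        by (rule Lim_transform_eventually[OF tendsto_const]) (use e in \<open>auto elim: eventually_mono\<close>)
      then show ?thesis using sp by (simp add: min_def)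
    qed
  qed
  then show ?thesis by (simp add: DERIV_def)
qed

lemma deriv_chi: "deriv chi s = min s 0"
  using chi_deriv DERIV_imp_deriv by blast

lemma chi_nonneg: "chi x \<ge> 0" by (simp add: chi_def)

lemma chi_neg_exact: "z < 0 \<Longrightarrow> z + h < 0 \<Longrightarrow> chi (z + h) - chi z - min z 0 * h = h^2/2"
  by (simp add: chi_def min_def field_simps power2_eq_square)

lemma chi_convex: "chi (z + h) - chi z - min z 0 * h \<ge> 0"
proof (cases "z < 0")
  case True
  show ?thesis
  proof (cases "z + h < 0")
    case True
    have "h^2/2 \<ge> 0" by simp
    then show ?thesis using \<open>z<0\<close> chi_neg_exact[of z h] True by linarith
  next
    case False
    then have "- z * (z/2 + h) \<ge> 0" using \<open>z<0\<close> by (intro mult_nonneg_nonneg) auto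
    then show ?thesis using False True by (simp add: chi_def min_def power2_eq_square algebra_simps)
  qed
next
  case False
  then show ?thesis using chi_nonneg[of "z+h"] by (simp add: chi_def min_def)
qed

lemma norm_rem_lower:
  fixes d e :: "'a::real_inner"
  assumes "d \<noteq> 0"
  shows "norm (d + e) - norm d - (d \<bullet> e) / norm d \<ge> 0"
proof -
  have nd: "norm d > 0" using assms by simp
  have "(d + e) \<bullet> d \<le> norm (d + e) * norm d" by (rule norm_cauchy_schwarz)
  moreover have "(d + e) \<bullet> d = norm d ^ 2 + d \<bullet> e"
    using inner_add_left[of d e d] inner_commute[of e d] power2_norm_eq_inner[of d] by simp
  ultimately have "norm d ^ 2 + d \<bullet> e \<le> norm (d + e) * norm d" by simp
  then have "norm d + (d \<bullet> e) / norm d \<le> norm (d + e)" using nd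
    by (simp add: field_simps power2_eq_square)
  then show ?thesis by simp
qed

lemma norm_rem_upper:
  fixes d e :: "'a::real_inner"
  assumes "d \<noteq> 0" "2 * norm e \<le> norm d"
  shows "norm (d + e) - norm d - (d \<bullet> e) / norm d \<le> norm e ^ 2 / norm d"
proof -
  define n where "n = norm d"
  have nd: "n > 0" using assms by (simp add: n_def)
  define a where "a = n + (d \<bullet> e) / n"
  define x where "x = norm (d + e)"
  have cs: "\<bar>d \<bullet> e\<bar> \<le> n * norm e" unfolding n_def by (rule Cauchy_Schwarz_ineq2)
  have x2: "x^2 = n^2 + 2 * (d \<bullet> e) + norm e ^ 2"
    unfolding x_def n_def using inner_commute[of e d] by (simp add: power2_norm_eq_inner inner_add_left inner_add_right)
  have a2: "a^2 = n^2 + 2 * (d \<bullet> e) + (d \<bullet> e)^2 / n^2"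
    unfolding a_def using nd by (simp add: field_simps power2_eq_square)
  have "(d \<bullet> e)^2 / n^2 \<ge> 0" by simp
  then have dif: "x^2 - a^2 \<le> norm e ^ 2" using x2 a2 by simp
  have "\<bar>(d \<bullet> e) / n\<bar> \<le> norm e" using cs nd by (simp add: abs_div pos_divide_le_eq mult.commute)
  then have age: "a \<ge> n / 2" using assms(2) unfolding a_def n_def by linarith
  have xge: "x \<ge> n / 2"
  proof -
    have "norm d \<le> norm (d + e) + norm e" using norm_triangle_ineq4[of "d+e" e] by simp
    then show ?thesis using assms(2) unfolding x_def n_def by linarith
  qed
  have "x - a = (x^2 - a^2) / (x + a)" using age xge nd by (simp add: field_simps power2_eq_square)
  also have "\<dots> \<le> norm e ^ 2 / (x + a)" using dif age xge nd by (simp add: divide_right_mono)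
  also have "\<dots> \<le> norm e ^ 2 / n" using age xge nd by (simp add: frac_le)
  finally show ?thesis unfolding x_def a_def n_def by simp
qed


type_synonym par = "real \<times> real \<times> real \<times> real"

definition li :: "par \<Rightarrow> real" where "li y = fst y"
definition lj :: "par \<Rightarrow> real" where "lj y = fst (snd y)"
definition lk :: "par \<Rightarrow> real" where "lk y = fst (snd (snd y))"
definition tt :: "par \<Rightarrow> real" where "tt y = snd (snd (snd y))"

definition cc where "cc y = sqrt (1 - tt y ^ 2)"
definition xi where "xi y = (lj y ^2 - li y ^2 + lk y ^2) / (2 * lk y)"
definition eta where "eta y = sqrt (lj y ^2 - xi y ^2)"
definition Pjx where "Pjx y = lk y * cc y"
definition Pjz where "Pjz y = lk y * tt y"
definition Pkx where "Pkx y = xi y * cc y - eta y * tt y"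
definition Pkz where "Pkz y = xi y * tt y + eta y * cc y"
definition Ax where "Ax y = Pkx y / lj y"
definition Az where "Az y = Pkz y / lj y"
definition Bx where "Bx y = (Pkx y - Pjx y) / li y"
definition Bz where "Bz y = (Pkz y - Pjz y) / li y"
definition dt where "dt y = Ax y * Bz y - Az y * Bx y"
definition sj where "sj y = Bx y / dt y"
definition si where "si y = - Ax y / dt y"
definition sk where "sk y = - sj y * Ax y / cc y"
definition psi where "psi y = (si y * Bz y - sj y * Az y - 2 * sk y * tt y) / lk y"
definition wi where "wi y = 1 - sj y * Az y - sk y * tt y"
definition wj where "wj y = 1 - si y * Bz y + sk y * tt y"

definition good :: "par \<Rightarrow> bool" where
  "good y \<longleftrightarrow> li y > 0 \<and> lj y > 0 \<and> lk y > 0 \<and> tt y ^ 2 < 1 \<and> xi y ^ 2 < lj y ^ 2 \<and> dt y \<noteq> 0"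

lemma c_li[continuous_intros]: "continuous (at y within S) li" unfolding li_def[abs_def] by (intro continuous_intros)
lemma c_lj[continuous_intros]: "continuous (at y within S) lj" unfolding lj_def[abs_def] by (intro continuous_intros)
lemma c_lk[continuous_intros]: "continuous (at y within S) lk" unfolding lk_def[abs_def] by (intro continuous_intros)
lemma c_tt[continuous_intros]: "continuous (at y within S) tt" unfolding tt_def[abs_def] by (intro continuous_intros)
lemma c_cc[continuous_intros]: "continuous (at y within S) cc" unfolding cc_def[abs_def] by (intro continuous_intros)
lemma c_xi[continuous_intros]: "lk y \<noteq> 0 \<Longrightarrow> continuous (at y within S) xi"
  unfolding xi_def[abs_def] by (intro continuous_intros) auto
lemma c_eta[continuous_intros]: "lk y \<noteq> 0 \<Longrightarrow> continuous (at y within S) eta"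
  unfolding eta_def[abs_def] by (intro continuous_intros) auto
lemma c_Pjx[continuous_intros]: "continuous (at y within S) Pjx"
  unfolding Pjx_def[abs_def] by (intro continuous_intros)
lemma c_Pjz[continuous_intros]: "continuous (at y within S) Pjz"
  unfolding Pjz_def[abs_def] by (intro continuous_intros)
lemma c_Pkx[continuous_intros]: "lk y \<noteq> 0 \<Longrightarrow> continuous (at y within S) Pkx"
  unfolding Pkx_def[abs_def] by (intro continuous_intros) auto
lemma c_Pkz[continuous_intros]: "lk y \<noteq> 0 \<Longrightarrow> continuous (at y within S) Pkz"
  unfolding Pkz_def[abs_def] by (intro continuous_intros) auto
lemma c_Ax[continuous_intros]: "lk y \<noteq> 0 \<Longrightarrow> lj y \<noteq> 0 \<Longrightarrow> continuous (at y within S) Ax"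
  unfolding Ax_def[abs_def] by (intro continuous_intros) auto
lemma c_Az[continuous_intros]: "lk y \<noteq> 0 \<Longrightarrow> lj y \<noteq> 0 \<Longrightarrow> continuous (at y within S) Az"
  unfolding Az_def[abs_def] by (intro continuous_intros) auto
lemma c_Bx[continuous_intros]: "lk y \<noteq> 0 \<Longrightarrow> li y \<noteq> 0 \<Longrightarrow> continuous (at y within S) Bx"
  unfolding Bx_def[abs_def] by (intro continuous_intros) auto
lemma c_Bz[continuous_intros]: "lk y \<noteq> 0 \<Longrightarrow> li y \<noteq> 0 \<Longrightarrow> continuous (at y within S) Bz"
  unfolding Bz_def[abs_def] by (intro continuous_intros) auto
lemma c_dt[continuous_intros]: "lk y \<noteq> 0 \<Longrightarrow> li y \<noteq> 0 \<Longrightarrow> lj y \<noteq> 0 \<Longrightarrow> continuous (at y within S) dt"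
  unfolding dt_def[abs_def] by (intro continuous_intros) auto

lemma good_cc: "good y \<Longrightarrow> cc y > 0"
  unfolding good_def cc_def by simp

lemma c_sj[continuous_intros]: "good y \<Longrightarrow> continuous (at y within S) sj"
  unfolding sj_def[abs_def] by (intro continuous_intros) (auto simp: good_def)
lemma c_si[continuous_intros]: "good y \<Longrightarrow> continuous (at y within S) si"
  unfolding si_def[abs_def] by (intro continuous_intros) (auto simp: good_def)
lemma c_sk[continuous_intros]: "good y \<Longrightarrow> continuous (at y within S) sk"
  unfolding sk_def[abs_def] using good_cc[of y] by (intro continuous_intros) (auto simp: good_def)
lemma c_psi[continuous_intros]: "good y \<Longrightarrow> continuous (at y within S) psi"
  unfolding psi_def[abs_def] by (intro continuous_intros) (auto simp: good_def)
lemma c_wi[continuous_intros]: "good y \<Longrightarrow> continuous (at y within S) wi"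
  unfolding wi_def[abs_def] by (intro continuous_intros) (auto simp: good_def)
lemma c_wj[continuous_intros]: "good y \<Longrightarrow> continuous (at y within S) wj"
  unfolding wj_def[abs_def] by (intro continuous_intros) (auto simp: good_def)

lemma good_alg:
  assumes "good y"
  shows "cc y ^ 2 + tt y ^ 2 = 1" "eta y ^ 2 = lj y ^ 2 - xi y ^ 2"
    "Pkx y ^ 2 + Pkz y ^ 2 = lj y ^ 2"
    "(Pkx y - Pjx y) ^ 2 + (Pkz y - Pjz y) ^ 2 = li y ^ 2"
    "Pjx y ^ 2 + Pjz y ^ 2 = lk y ^ 2"
proof -
  have t: "tt y ^ 2 < 1" and x: "xi y ^ 2 < lj y ^ 2" and k: "lk y > 0"
    using assms by (auto simp: good_def)
  show c2: "cc y ^ 2 + tt y ^ 2 = 1" using t unfolding cc_def by simp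
  show e2: "eta y ^ 2 = lj y ^ 2 - xi y ^ 2" using x unfolding eta_def by simp
  have "Pkx y ^ 2 + Pkz y ^ 2 = (xi y ^ 2 + eta y ^ 2) * (cc y ^ 2 + tt y ^ 2)"
    unfolding Pkx_def Pkz_def by (simp add: power2_eq_square algebra_simps)
  then show "Pkx y ^ 2 + Pkz y ^ 2 = lj y ^ 2" using c2 e2 by simp
  have "(Pkx y - Pjx y) ^ 2 + (Pkz y - Pjz y) ^ 2 = ((xi y - lk y) ^ 2 + eta y ^ 2) * (cc y ^ 2 + tt y ^ 2)"
    unfolding Pkx_def Pkz_def Pjx_def Pjz_def by (simp add: power2_eq_square algebra_simps)
  also have "\<dots> = (xi y - lk y) ^ 2 + lj y ^ 2 - xi y ^ 2" using c2 e2 by simp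
  also have "\<dots> = li y ^ 2" using k unfolding xi_def by (simp add: field_simps power2_eq_square)
  finally show "(Pkx y - Pjx y) ^ 2 + (Pkz y - Pjz y) ^ 2 = li y ^ 2" .
  have "Pjx y ^ 2 + Pjz y ^ 2 = lk y ^ 2 * (cc y ^ 2 + tt y ^ 2)"
    unfolding Pjx_def Pjz_def by (simp add: power2_eq_square algebra_simps)
  then show "Pjx y ^ 2 + Pjz y ^ 2 = lk y ^ 2" using c2 by simp
qed

lemma good_force:
  assumes "good y"
  shows "sj y * Ax y + si y * Bx y = 0" "sj y * Az y + si y * Bz y + 1 = 0"
    "sj y * Ax y + sk y * cc y = 0" "- si y * Bx y + sk y * cc y = 0"
proof -
  have d: "dt y \<noteq> 0" and c: "cc y > 0" using assms good_cc by (auto simp: good_def)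
  show "sj y * Ax y + si y * Bx y = 0" unfolding sj_def si_def using d by (simp add: field_simps)
  have "sj y * Az y + si y * Bz y = (Bx y * Az y - Ax y * Bz y) / dt y" using d
    by (simp add: sj_def si_def field_simps)
  also have "Bx y * Az y - Ax y * Bz y = - dt y" by (simp add: dt_def)
  finally have "sj y * Az y + si y * Bz y = - dt y / dt y" .
  then show "sj y * Az y + si y * Bz y + 1 = 0" using d by simp
  show "sj y * Ax y + sk y * cc y = 0" unfolding sk_def using c by simp
  show "- si y * Bx y + sk y * cc y = 0" unfolding sk_def sj_def si_def using c d by (simp add: field_simps)
qed

lemma center_vals:
  fixes bi bj bk :: real
  assumes pos: "bi > 0" "bj > 0" "bk > 0" and tri: "bi < bj + bk" "bj < bi + bk" "bk < bi + bj"
    and mx: "bi \<le> bk" "bj \<le> bk"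
  defines "y0 \<equiv> (bi, bj, bk, 0::real)"
  shows "good y0" "wi y0 \<ge> 1" "wj y0 \<ge> 1" "Pkz y0 > 0"
proof -
  have L: "li y0 = bi" "lj y0 = bj" "lk y0 = bk" "tt y0 = 0"
    by (simp_all add: y0_def li_def lj_def lk_def tt_def)
  have c: "cc y0 = 1" by (simp add: cc_def L)
  define x where "x = (bj ^2 - bi ^2 + bk ^2) / (2 * bk)"
  have xd: "xi y0 = x" by (simp add: xi_def L x_def)
  have "bi ^ 2 \<le> bk ^ 2" using pos mx by (intro power_mono) auto
  moreover have "bj ^ 2 \<ge> 0" by simp
  ultimately have "0 \<le> bj ^2 - bi ^2 + bk ^2" by linarith
  then have x0: "x \<ge> 0" unfolding x_def using pos by simp
  have "x * (2 * bk) = bj ^2 - bi ^2 + bk ^2" unfolding x_def using pos by simp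
  moreover have "bj ^2 - bi ^2 + bk ^2 < 2 * bk * bj"
  proof -
    have "\<bar>bk - bj\<bar> < bi" using tri by auto
    then have "\<bar>bk - bj\<bar>^2 < bi^2" by (intro power_strict_mono) auto
    then have "(bk - bj)^2 < bi^2" by simp
    then show ?thesis by (simp add: power2_eq_square algebra_simps)
  qed
  ultimately have xlt: "x < bj" using pos by (smt (verit) mult_le_cancel_left_pos mult.commute)
  have xle: "x \<le> bk"
  proof -
    have "bj ^ 2 \<le> bk ^ 2" using pos mx by (intro power_mono) auto
    moreover have "bi ^ 2 \<ge> 0" by simp
    ultimately have "bj ^2 - bi ^2 + bk ^2 \<le> 2 * bk ^ 2" by linarith
    then show ?thesis unfolding x_def using pos by (simp add: divide_le_eq power2_eq_square)
  qed
  have x2: "x ^ 2 < bj ^ 2" using x0 xlt by (intro power_strict_mono) auto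
  define e where "e = sqrt (bj ^2 - x ^2)"
  have e0: "e > 0" unfolding e_def using x2 by simp
  have ed: "eta y0 = e" by (simp add: eta_def L xd e_def)
  have P: "Pkx y0 = x" "Pkz y0 = e" "Pjx y0 = bk" "Pjz y0 = 0"
    by (simp_all add: Pkx_def Pkz_def Pjx_def Pjz_def xd ed c L)
  have AB: "Ax y0 = x / bj" "Az y0 = e / bj" "Bx y0 = (x - bk) / bi" "Bz y0 = e / bi"
    by (simp_all add: Ax_def Az_def Bx_def Bz_def P L)
  have D: "dt y0 = e * bk / (bi * bj)"
    using pos by (simp add: dt_def AB field_simps)
  have D0: "dt y0 > 0" using D pos e0 by simp
  show "good y0" unfolding good_def using pos D0 x2 by (simp add: L xd)
  have "sj y0 * Az y0 = (x - bk) / bk" using pos e0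
    by (simp add: sj_def D AB field_simps)
  then have "wi y0 = 2 - x / bk" using pos by (simp add: wi_def L field_simps)
  then show "wi y0 \<ge> 1" using xle pos by (simp add: divide_le_eq)
  have "si y0 * Bz y0 = - x / bk" using pos e0
    by (simp add: si_def D AB field_simps)
  then have "wj y0 = 1 + x / bk" by (simp add: wj_def L)
  then show "wj y0 \<ge> 1" using x0 pos by simp
  show "Pkz y0 > 0" using P e0 by simp
qed


lemma ev_half:
  fixes f :: "par \<Rightarrow> real"
  assumes "continuous (at y0) f" "f y0 > 0"
  shows "\<forall>\<^sub>F y in nhds y0. f y > f y0 / 2"
proof -
  have "(f \<longlongrightarrow> f y0) (nhds y0)"
    using assms(1) by (simp add: continuous_at tendsto_at_iff_tendsto_nhds)
  then show ?thesis using assms(2) order_tendstoD(1)[of f "f y0" "nhds y0" "f y0/2"] by simp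
qed

lemma nbhd:
  assumes g0: "good y0" and w: "wi y0 \<ge> 1" "wj y0 \<ge> 1" and p: "Pkz y0 > 0"
  obtains r where "r > 0" "\<And>y. y \<in> cball y0 r \<Longrightarrow> good y \<and> wi y \<ge> 1/2 \<and> wj y \<ge> 1/2 \<and>
     Pkz y \<ge> Pkz y0 / 2 \<and> li y \<ge> li y0 / 2 \<and> lj y \<ge> lj y0 / 2 \<and> lk y \<ge> lk y0 / 2"
proof -
  have gg: "li y0 > 0" "lj y0 > 0" "lk y0 > 0" "1 - tt y0 ^ 2 > 0" "lj y0 ^ 2 - xi y0 ^ 2 > 0" "\<bar>dt y0\<bar> > 0"
    using g0 by (auto simp: good_def)
  have c1: "continuous (at y0) li" "continuous (at y0) lj" "continuous (at y0) lk"
    "continuous (at y0) (\<lambda>y. 1 - tt y ^ 2)" "continuous (at y0) (\<lambda>y. lj y ^ 2 - xi y ^ 2)"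
    "continuous (at y0) (\<lambda>y. \<bar>dt y\<bar>)" "continuous (at y0) wi" "continuous (at y0) wj"
    "continuous (at y0) Pkz"
    using gg g0 by (auto intro!: continuous_intros)
  have "\<forall>\<^sub>F y in nhds y0. li y > li y0 / 2 \<and> lj y > lj y0 / 2 \<and> lk y > lk y0 / 2 \<and>
      1 - tt y ^ 2 > (1 - tt y0 ^ 2) / 2 \<and> lj y ^ 2 - xi y ^ 2 > (lj y0 ^ 2 - xi y0 ^ 2) / 2 \<and>
      \<bar>dt y\<bar> > \<bar>dt y0\<bar> / 2 \<and> wi y > wi y0 / 2 \<and> wj y > wj y0 / 2 \<and> Pkz y > Pkz y0 / 2"
    using w by (intro eventually_conj ev_half[OF c1(1) gg(1)] ev_half[OF c1(2) gg(2)] ev_half[OF c1(3) gg(3)]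
      ev_half[OF c1(4) gg(4)] ev_half[OF c1(5) gg(5)] ev_half[OF c1(6) gg(6)]
      ev_half[OF c1(7)] ev_half[OF c1(8)] ev_half[OF c1(9) p]) auto
  then obtain d where d: "d > 0" "\<And>y. dist y y0 < d \<Longrightarrow> li y > li y0 / 2 \<and> lj y > lj y0 / 2 \<and> lk y > lk y0 / 2 \<and>
      1 - tt y ^ 2 > (1 - tt y0 ^ 2) / 2 \<and> lj y ^ 2 - xi y ^ 2 > (lj y0 ^ 2 - xi y0 ^ 2) / 2 \<and>
      \<bar>dt y\<bar> > \<bar>dt y0\<bar> / 2 \<and> wi y > wi y0 / 2 \<and> wj y > wj y0 / 2 \<and> Pkz y > Pkz y0 / 2"
    unfolding eventually_nhds_metric by blast
  show ?thesis
  proof (rule that[of "d/2"])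
    show "d/2 > 0" using d by simp
    fix y assume "y \<in> cball y0 (d/2)"
    then have "dist y y0 < d" using d by (simp add: dist_commute)
    from d(2)[OF this] gg w show "good y \<and> wi y \<ge> 1/2 \<and> wj y \<ge> 1/2 \<and>
     Pkz y \<ge> Pkz y0 / 2 \<and> li y \<ge> li y0 / 2 \<and> lj y \<ge> lj y0 / 2 \<and> lk y \<ge> lk y0 / 2"
      unfolding good_def by auto
  qed
qed

lemma bound_on:
  fixes f :: "par \<Rightarrow> real"
  assumes "\<And>y. y \<in> cball y0 r \<Longrightarrow> good y" "\<And>y. good y \<Longrightarrow> continuous (at y) f"
  obtains M where "M \<ge> 0" "\<And>y. y \<in> cball y0 r \<Longrightarrow> \<bar>f y\<bar> \<le> M"
proof -
  have "continuous_on (cball y0 r) f"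
    using assms by (intro continuous_at_imp_continuous_on) auto
  then obtain M where "M \<ge> 0" "\<And>y. y \<in> cball y0 r \<Longrightarrow> norm (f y) \<le> M"
    using continuous_on_compact_bound[of "cball y0 r" f] by auto
  then show ?thesis using that by auto
qed

definition Phi :: "real \<Rightarrow> real \<Rightarrow> real \<Rightarrow> real \<Rightarrow> real \<Rightarrow> par \<Rightarrow> par" where
  "Phi ks knp bi bj bk y = (bi + si y / ks, bj + sj y / ks, bk + sk y / ks, psi y / knp)"

lemma fixpoint:
  assumes gd: "\<And>y. y \<in> cball (bi,bj,bk,0) r \<Longrightarrow> good y" and r: "r > 0"
    and M: "\<And>y. y \<in> cball (bi,bj,bk,0) r \<Longrightarrow> \<bar>si y\<bar> \<le> M \<and> \<bar>sj y\<bar> \<le> M \<and> \<bar>sk y\<bar> \<le> M \<and> \<bar>psi y\<bar> \<le> M"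
    and ks: "ks > 0" "4 * M \<le> r * ks" and knp: "knp > 0" "4 * M \<le> r * knp"
  obtains y where "y \<in> cball (bi,bj,bk,0) r" "Phi ks knp bi bj bk y = y"
proof -
  let ?S = "cball (bi,bj,bk,0::real) r"
  have cont: "continuous_on ?S (Phi ks knp bi bj bk)"
    unfolding Phi_def[abs_def] using gd ks(1) knp(1)
    by (intro continuous_at_imp_continuous_on ballI) (auto intro!: continuous_intros)
  have into: "Phi ks knp bi bj bk \<in> ?S \<rightarrow> ?S"
  proof
    fix y assume y: "y \<in> ?S"
    have "dist (bi,bj,bk,0) (Phi ks knp bi bj bk y) = norm (si y / ks, sj y / ks, sk y / ks, psi y / knp)"
      by (subst dist_commute) (simp add: Phi_def dist_norm)
    also have "\<dots> \<le> \<bar>si y / ks\<bar> + (\<bar>sj y / ks\<bar> + (\<bar>sk y / ks\<bar> + \<bar>psi y / knp\<bar>))"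
      by (rule order_trans[OF norm_Pair_le], simp,
          rule order_trans[OF norm_Pair_le], simp, rule order_trans[OF norm_Pair_le], simp)
    also have "\<dots> \<le> M / ks + (M / ks + (M / ks + M / knp))"
      using M[OF y] ks knp by (intro add_mono) (auto simp: abs_div divide_right_mono)
    also have "\<dots> \<le> r / 4 + (r/4 + (r/4 + r/4))"
      using ks knp by (intro add_mono) (auto simp: divide_le_eq mult.commute)
    finally show "Phi ks knp bi bj bk y \<in> ?S" by simp
  qed
  have ne: "?S \<noteq> {}" using r by auto
  from brouwer[OF compact_cball convex_cball ne cont into] that show ?thesis by blast
qed


definition mkconf :: "3 \<Rightarrow> 3 \<Rightarrow> 3 \<Rightarrow> real \<times> real \<Rightarrow> real \<times> real \<Rightarrow> real \<times> real \<Rightarrow> config" where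
  "mkconf i j k a b c = (let P = (\<lambda>v. if v = i then a else if v = j then b else c) in
     ((\<chi> v. fst (P v) - fst (P 1)), (\<chi> v. snd (P v))))"

lemma pos_mk:
  assumes "distinct [i,j,k::3]"
  shows "pos (mkconf i j k a b c) i - pos (mkconf i j k a b c) j = a - b"
    "pos (mkconf i j k a b c) i - pos (mkconf i j k a b c) k = a - c"
    "pos (mkconf i j k a b c) j - pos (mkconf i j k a b c) k = b - c"
    "snd (mkconf i j k a b c) $ i = snd a" "snd (mkconf i j k a b c) $ j = snd b"
    "snd (mkconf i j k a b c) $ k = snd c"
  using assms by (auto simp: mkconf_def pos_def Let_def prod_eq_iff)

lemma mk_comp:
  assumes "distinct [i,j,k::3]"
  shows "fst (mkconf i j k a b c) $ i - fst (mkconf i j k a b c) $ j = fst a - fst b"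
    "fst (mkconf i j k a b c) $ i - fst (mkconf i j k a b c) $ k = fst a - fst c"
    "fst (mkconf i j k a b c) $ j - fst (mkconf i j k a b c) $ k = fst b - fst c"
  using assms by (auto simp: mkconf_def Let_def)

definition FB :: "real \<Rightarrow> real \<Rightarrow> (3 \<Rightarrow> real) \<Rightarrow> config \<Rightarrow> bool" where
  "FB ks knp lbar q \<longleftrightarrow> (\<forall>w. ks * (\<Sum>e\<in>UNIV. (ell q e - lbar e) * (dp q e \<bullet> dp w e) / ell q e)
      + knp * (\<Sum>v\<in>UNIV. min (snd q $ v) 0 * snd w $ v) + (\<Sum>v\<in>UNIV. snd w $ v) = 0)"

lemma norm_pair_real: "norm (a::real, b::real) = sqrt (a^2 + b^2)"
  by (simp add: norm_Pair)

lemma mk_fixed: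
  assumes dis: "distinct [i,j,k::3]" and g: "good y"
    and fp: "li y = lbar i + si y / ks" "lj y = lbar j + sj y / ks" "lk y = lbar k + sk y / ks"
      "tt y = psi y / knp"
    and ks: "ks > 0" and knp: "knp > 0"
    and apex: "Pkz y - wi y / knp > 0" and wpos: "wi y > 0" "wj y > 0"
  defines "q \<equiv> mkconf i j k (0, - wi y / knp) (Pjx y, - wi y / knp + Pjz y) (Pkx y, - wi y / knp + Pkz y)"
  shows "ell q k = lk y" "ell q j = lj y" "ell q i = li y"
    "snd q $ i = - wi y / knp" "snd q $ j = - wj y / knp" "snd q $ k = Pkz y - wi y / knp"
    "FB ks knp lbar q"
proof -
  have gl: "li y > 0" "lj y > 0" "lk y > 0" using g by (auto simp: good_def)
  note alg = good_alg[OF g]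
  note frc = good_force[OF g]
  have dis2: "distinct [i,k,j]" "distinct [j,k,i]" using dis by auto
  have lkq: "ell q k = lk y"
    using dp_norm_role[OF dis, of q] pos_mk(1)[OF dis] alg(5) gl
    by (simp add: ell_dp q_def norm_pair_real power2_eq_square[symmetric] real_sqrt_unique)
  have ljq: "ell q j = lj y"
    using dp_norm_role[OF dis2(1), of q] pos_mk(2)[OF dis] alg(3) gl
    by (simp add: ell_dp q_def norm_pair_real power2_eq_square[symmetric] real_sqrt_unique)
  have liq: "ell q i = li y"
  proof -
    have "norm ((Pjx y, - wi y / knp + Pjz y) - (Pkx y, - wi y / knp + Pkz y)) = li y"
      using alg(4) gl by (simp add: norm_pair_real power2_commute[of "Pjx y"] power2_commute[of "Pjz y"] real_sqrt_unique)
    then show ?thesis using dp_norm_role[OF dis2(2), of q] pos_mk(3)[OF dis]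
      by (simp add: ell_dp q_def)
  qed
  show "ell q k = lk y" "ell q j = lj y" "ell q i = li y" by fact+
  show zi: "snd q $ i = - wi y / knp" "snd q $ k = Pkz y - wi y / knp" using pos_mk[OF dis] by (simp_all add: q_def)
  have kz: "knp * (- wi y / knp + Pjz y) = - wj y"
  proof -
    have "lk y * psi y = si y * Bz y - sj y * Az y - 2 * sk y * tt y"
      using gl by (simp add: psi_def)
    then have "knp * Pjz y = si y * Bz y - sj y * Az y - 2 * sk y * tt y"
      using knp by (simp add: Pjz_def fp(4) field_simps)
    moreover have "knp * (- wi y / knp + Pjz y) = - wi y + knp * Pjz y" using knp by (simp add: field_simps)
    ultimately show ?thesis by (simp add: wi_def wj_def algebra_simps)
  qed
  show zj: "snd q $ j = - wj y / knp" using pos_mk[OF dis] kz knp by (simp add: q_def field_simps)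
  show "FB ks knp lbar q"
    unfolding FB_def
  proof
    fix w :: config
    define Wix where "Wix = fst w $ i"
    define Wjx where "Wjx = fst w $ j"
    define Wkx where "Wkx = fst w $ k"
    define Wiz where "Wiz = snd w $ i"
    define Wjz where "Wjz = snd w $ j"
    define Wkz where "Wkz = snd w $ k"
    have tk: "ks * ((ell q k - lbar k) * (dp q k \<bullet> dp w k) / ell q k) = - sk y * (cc y * (Wix - Wjx) + tt y * (Wiz - Wjz))"
    proof -
      have "dp q k \<bullet> dp w k = - (Pjx y * (Wix - Wjx) + Pjz y * (Wiz - Wjz))"
        using dp_inner_role[OF dis, of q w] mk_comp[OF dis] pos_mk(4-6)[OF dis]
        by (simp add: q_def pos_def Wix_def Wjx_def Wiz_def Wjz_def algebra_simps)
      also have "\<dots> = - lk y * (cc y * (Wix - Wjx) + tt y * (Wiz - Wjz))"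
        by (simp add: Pjx_def Pjz_def algebra_simps)
      finally have X: "dp q k \<bullet> dp w k = - lk y * (cc y * (Wix - Wjx) + tt y * (Wiz - Wjz))" .
      have T: "ks * (lk y - lbar k) = sk y" using fp(3) ks by (simp add: field_simps)
      have "ks * ((ell q k - lbar k) * (dp q k \<bullet> dp w k) / ell q k) = (ks * (lk y - lbar k)) * ((dp q k \<bullet> dp w k) / lk y)"
        using lkq by simp
      also have "\<dots> = sk y * ((dp q k \<bullet> dp w k) / lk y)" using T by simp
      also have "(dp q k \<bullet> dp w k) / lk y = - (cc y * (Wix - Wjx) + tt y * (Wiz - Wjz))" using X gl by simp
      finally show ?thesis by (simp add: algebra_simps)
    qed
    have tj: "ks * ((ell q j - lbar j) * (dp q j \<bullet> dp w j) / ell q j) = - sj y * (Ax y * (Wix - Wkx) + Az y * (Wiz - Wkz))"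
    proof -
      have "dp q j \<bullet> dp w j = - (Pkx y * (Wix - Wkx) + Pkz y * (Wiz - Wkz))"
        using dp_inner_role[OF dis2(1), of q w] mk_comp[OF dis] pos_mk(4-6)[OF dis]
        by (simp add: q_def pos_def Wix_def Wkx_def Wiz_def Wkz_def algebra_simps)
      also have "\<dots> = - lj y * (Ax y * (Wix - Wkx) + Az y * (Wiz - Wkz))"
        using gl by (simp add: Ax_def Az_def field_simps)
      finally have X: "dp q j \<bullet> dp w j = - lj y * (Ax y * (Wix - Wkx) + Az y * (Wiz - Wkz))" .
      have T: "ks * (lj y - lbar j) = sj y" using fp(2) ks by (simp add: field_simps)
      have "ks * ((ell q j - lbar j) * (dp q j \<bullet> dp w j) / ell q j) = (ks * (lj y - lbar j)) * ((dp q j \<bullet> dp w j) / lj y)"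
        using ljq by simp
      also have "\<dots> = sj y * ((dp q j \<bullet> dp w j) / lj y)" using T by simp
      also have "(dp q j \<bullet> dp w j) / lj y = - (Ax y * (Wix - Wkx) + Az y * (Wiz - Wkz))" using X gl by simp
      finally show ?thesis by (simp add: algebra_simps)
    qed
    have ti: "ks * ((ell q i - lbar i) * (dp q i \<bullet> dp w i) / ell q i) = - si y * (Bx y * (Wjx - Wkx) + Bz y * (Wjz - Wkz))"
    proof -
      have "dp q i \<bullet> dp w i = - ((Pkx y - Pjx y) * (Wjx - Wkx) + (Pkz y - Pjz y) * (Wjz - Wkz))"
        using dp_inner_role[OF dis2(2), of q w] mk_comp[OF dis] pos_mk(4-6)[OF dis]
        by (simp add: q_def pos_def Wjx_def Wkx_def Wjz_def Wkz_def algebra_simps)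
      also have "\<dots> = - li y * (Bx y * (Wjx - Wkx) + Bz y * (Wjz - Wkz))"
        using gl by (simp add: Bx_def Bz_def field_simps)
      finally have X: "dp q i \<bullet> dp w i = - li y * (Bx y * (Wjx - Wkx) + Bz y * (Wjz - Wkz))" .
      have T: "ks * (li y - lbar i) = si y" using fp(1) ks by (simp add: field_simps)
      have "ks * ((ell q i - lbar i) * (dp q i \<bullet> dp w i) / ell q i) = (ks * (li y - lbar i)) * ((dp q i \<bullet> dp w i) / li y)"
        using liq by simp
      also have "\<dots> = si y * ((dp q i \<bullet> dp w i) / li y)" using T by simp
      also have "(dp q i \<bullet> dp w i) / li y = - (Bx y * (Wjx - Wkx) + Bz y * (Wjz - Wkz))" using X gl by simp
      finally show ?thesis by (simp add: algebra_simps)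
    qed
    have mi: "min (snd q $ i) 0 = - wi y / knp" "min (snd q $ j) 0 = - wj y / knp" "min (snd q $ k) 0 = 0"
    proof -
      show "min (snd q $ i) 0 = - wi y / knp" using zi wpos knp by simp
      show "min (snd q $ j) 0 = - wj y / knp" using zj wpos knp by simp
      show "min (snd q $ k) 0 = 0" using zi apex by simp
    qed
    show "ks * (\<Sum>e\<in>UNIV. (ell q e - lbar e) * (dp q e \<bullet> dp w e) / ell q e)
      + knp * (\<Sum>v\<in>UNIV. min (snd q $ v) 0 * snd w $ v) + (\<Sum>v\<in>UNIV. snd w $ v) = 0"
    proof -
      have "ks * (\<Sum>e\<in>UNIV. (ell q e - lbar e) * (dp q e \<bullet> dp w e) / ell q e)
         = - sk y * (cc y * (Wix - Wjx) + tt y * (Wiz - Wjz)) - sj y * (Ax y * (Wix - Wkx) + Az y * (Wiz - Wkz))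
           - si y * (Bx y * (Wjx - Wkx) + Bz y * (Wjz - Wkz))"
        using tk tj ti sum3_dist[OF dis] by (simp add: distrib_left)
      moreover have "knp * (\<Sum>v\<in>UNIV. min (snd q $ v) 0 * snd w $ v) = - wi y * Wiz - wj y * Wjz"
      proof -
        have "(\<Sum>v\<in>UNIV. min (snd q $ v) 0 * snd w $ v) = (- wi y / knp) * Wiz + (- wj y / knp) * Wjz"
          using mi sum3_dist[OF dis] by (simp add: Wiz_def Wjz_def)
        then show ?thesis using knp by (simp add: field_simps)
      qed
      moreover have "(\<Sum>v\<in>UNIV. snd w $ v) = Wiz + Wjz + Wkz"
        using sum3_dist[OF dis] by (simp add: Wiz_def Wjz_def Wkz_def)
      moreover have "- sk y * (cc y * (Wix - Wjx) + tt y * (Wiz - Wjz)) - sj y * (Ax y * (Wix - Wkx) + Az y * (Wiz - Wkz))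
           - si y * (Bx y * (Wjx - Wkx) + Bz y * (Wjz - Wkz)) + (- wi y * Wiz - wj y * Wjz) + (Wiz + Wjz + Wkz)
         = - (sj y * Ax y + sk y * cc y) * Wix + (- si y * Bx y + sk y * cc y) * Wjx
           + (sj y * Ax y + si y * Bx y) * Wkx + (1 - sj y * Az y - sk y * tt y - wi y) * Wiz
           + (1 - si y * Bz y + sk y * tt y - wj y) * Wjz + (sj y * Az y + si y * Bz y + 1) * Wkz"
        by (simp add: algebra_simps)
      moreover have "(1 - sj y * Az y - sk y * tt y - wi y) = 0" "(1 - si y * Bz y + sk y * tt y - wj y) = 0"
        by (simp_all add: wi_def wj_def)
      ultimately show ?thesis using frc by simp
    qed
  qed
qed


lemma dp_add: "dp (q + w) e = dp q e + dp w e"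
  by (simp add: dp_def pos_def prod_eq_iff)

lemma edge_growth:
  fixes s ks u R :: real
  assumes "0 \<le> R" "R \<le> B" "ks \<ge> 0"
  shows "s * R + ks / 2 * (u + R)^2 \<ge> - \<bar>s\<bar> * B - ks / 2 * B^2 + ks / 4 * u^2"
proof -
  have "s * R \<ge> - \<bar>s\<bar> * B"
  proof -
    have "\<bar>s * R\<bar> \<le> \<bar>s\<bar> * B" using assms by (simp add: abs_mult mult_left_mono)
    then show ?thesis by linarith
  qed
  moreover have "(u + R)^2 \<ge> u^2/2 - B^2"
  proof -
    have "(u + 2*R)^2 \<ge> 0" by simp
    then have "(u + R)^2 \<ge> u^2/2 - R^2" by (simp add: power2_eq_square algebra_simps)
    moreover have "R^2 \<le> B^2" using assms by (intro power_mono) auto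
    ultimately show ?thesis by linarith
  qed
  then have "ks / 2 * (u + R)^2 \<ge> ks / 2 * (u^2/2 - B^2)" using assms by (intro mult_left_mono) auto
  ultimately show ?thesis by (simp add: algebra_simps)
qed

lemma growth_conf:
  assumes fb: "FB ks knp lbar q0" and el: "\<And>e. ell q0 e > 0" and ks: "ks \<ge> 0" and knp: "knp \<ge> 0"
    and C: "\<And>v. v \<in> C \<Longrightarrow> snd q0 $ v < 0 \<and> snd q0 $ v + snd w $ v < 0"
    and sm: "\<And>e. 2 * norm (dp w e) \<le> ell q0 e"
  shows "U ks knp lbar (q0 + w) - U ks knp lbar q0 \<ge>
    (\<Sum>e\<in>UNIV. - \<bar>ks * (ell q0 e - lbar e)\<bar> * (norm (dp w e)^2 / ell q0 e) - ks / 2 * (norm (dp w e)^2 / ell q0 e)^2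
       + ks / 4 * ((dp q0 e \<bullet> dp w e) / ell q0 e)^2)
    + knp / 2 * (\<Sum>v\<in>C. (snd w $ v)^2)"
proof -
  define s where "s e = ks * (ell q0 e - lbar e)" for e
  define u where "u e = (dp q0 e \<bullet> dp w e) / ell q0 e" for e
  define R where "R e = ell (q0 + w) e - ell q0 e - u e" for e
  define B where "B e = norm (dp w e)^2 / ell q0 e" for e
  have RB: "0 \<le> R e \<and> R e \<le> B e" for e
  proof -
    have nz: "dp q0 e \<noteq> 0" using el[of e] by (auto simp: ell_dp)
    have "R e = norm (dp q0 e + dp w e) - norm (dp q0 e) - (dp q0 e \<bullet> dp w e) / norm (dp q0 e)"
      by (simp add: R_def u_def ell_dp dp_add)
    then show ?thesis using norm_rem_lower[OF nz, of "dp w e"] norm_rem_upper[OF nz, of "dp w e"] sm[of e]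
      by (simp add: B_def ell_dp)
  qed
  have spring: "ks / 2 * ((ell (q0 + w) e - lbar e)^2 - (ell q0 e - lbar e)^2) = s e * u e + (s e * R e + ks / 2 * (u e + R e)^2)" for e
  proof -
    have "ell (q0 + w) e = ell q0 e + u e + R e" by (simp add: R_def)
    then show ?thesis by (simp add: s_def power2_eq_square algebra_simps)
  qed
  have chi_t: "knp * (chi (snd q0 $ v + snd w $ v) - chi (snd q0 $ v)) = knp * (min (snd q0 $ v) 0 * snd w $ v)
      + knp * (chi (snd q0 $ v + snd w $ v) - chi (snd q0 $ v) - min (snd q0 $ v) 0 * snd w $ v)" for v
    by (simp add: algebra_simps)
  have zq: "snd (q0 + w) $ v = snd q0 $ v + snd w $ v" for v by simp
  have Udiff: "U ks knp lbar (q0 + w) - U ks knp lbar q0 =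
     (\<Sum>e\<in>UNIV. ks / 2 * ((ell (q0 + w) e - lbar e)^2 - (ell q0 e - lbar e)^2))
     + (\<Sum>v\<in>UNIV. knp * (chi (snd q0 $ v + snd w $ v) - chi (snd q0 $ v))) + (\<Sum>v\<in>UNIV. snd w $ v)"
  proof -
    have "U ks knp lbar (q0 + w) - U ks knp lbar q0 = ks / 2 * ((\<Sum>e\<in>UNIV. (ell (q0 + w) e - lbar e)^2) - (\<Sum>e\<in>UNIV. (ell q0 e - lbar e)^2))
      + knp * ((\<Sum>v\<in>UNIV. chi (snd q0 $ v + snd w $ v)) - (\<Sum>v\<in>UNIV. chi (snd q0 $ v)))
      + ((\<Sum>v\<in>UNIV. snd q0 $ v + snd w $ v) - (\<Sum>v\<in>UNIV. snd q0 $ v))"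
      by (simp add: U_def algebra_simps)
    also have "\<dots> = (\<Sum>e\<in>UNIV. ks / 2 * ((ell (q0 + w) e - lbar e)^2 - (ell q0 e - lbar e)^2))
     + (\<Sum>v\<in>UNIV. knp * (chi (snd q0 $ v + snd w $ v) - chi (snd q0 $ v))) + (\<Sum>v\<in>UNIV. snd w $ v)"
      by (simp only: sum_subtractf[symmetric] sum_distrib_left) (simp add: sum.distrib)
    finally show ?thesis .
  qed
  also have "\<dots> = ((\<Sum>e\<in>UNIV. s e * u e) + knp * (\<Sum>v\<in>UNIV. min (snd q0 $ v) 0 * snd w $ v) + (\<Sum>v\<in>UNIV. snd w $ v))
     + (\<Sum>e\<in>UNIV. s e * R e + ks / 2 * (u e + R e)^2)
     + (\<Sum>v\<in>UNIV. knp * (chi (snd q0 $ v + snd w $ v) - chi (snd q0 $ v) - min (snd q0 $ v) 0 * snd w $ v))"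
    unfolding spring chi_t by (simp add: sum.distrib sum_distrib_left)
  also have "(\<Sum>e\<in>UNIV. s e * u e) + knp * (\<Sum>v\<in>UNIV. min (snd q0 $ v) 0 * snd w $ v) + (\<Sum>v\<in>UNIV. snd w $ v) = 0"
  proof -
    have fbw: "ks * (\<Sum>e\<in>UNIV. (ell q0 e - lbar e) * (dp q0 e \<bullet> dp w e) / ell q0 e)
      + knp * (\<Sum>v\<in>UNIV. min (snd q0 $ v) 0 * snd w $ v) + (\<Sum>v\<in>UNIV. snd w $ v) = 0"
      using fb unfolding FB_def by blast
    have "(\<Sum>e\<in>UNIV. s e * u e) = ks * (\<Sum>e\<in>UNIV. (ell q0 e - lbar e) * (dp q0 e \<bullet> dp w e) / ell q0 e)"
    proof -
      have "s e * u e = ks * ((ell q0 e - lbar e) * (dp q0 e \<bullet> dp w e) / ell q0 e)" for e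
        by (simp add: s_def u_def)
      then show ?thesis by (simp add: sum_distrib_left)
    qed
    then show ?thesis using fbw by simp
  qed
  finally have eq: "U ks knp lbar (q0 + w) - U ks knp lbar q0 = (\<Sum>e\<in>UNIV. s e * R e + ks / 2 * (u e + R e)^2)
     + (\<Sum>v\<in>UNIV. knp * (chi (snd q0 $ v + snd w $ v) - chi (snd q0 $ v) - min (snd q0 $ v) 0 * snd w $ v))"
    by simp
  have e1: "(\<Sum>e\<in>UNIV. s e * R e + ks / 2 * (u e + R e)^2) \<ge>
      (\<Sum>e\<in>UNIV. - \<bar>s e\<bar> * B e - ks / 2 * B e ^2 + ks / 4 * u e ^2)"
    using RB ks by (intro sum_mono edge_growth) auto
  have e2: "(\<Sum>v\<in>UNIV. knp * (chi (snd q0 $ v + snd w $ v) - chi (snd q0 $ v) - min (snd q0 $ v) 0 * snd w $ v))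
     \<ge> knp / 2 * (\<Sum>v\<in>C. (snd w $ v)^2)"
  proof -
    define f where "f v = knp * (chi (snd q0 $ v + snd w $ v) - chi (snd q0 $ v) - min (snd q0 $ v) 0 * snd w $ v)" for v
    have f0: "f v \<ge> 0" for v unfolding f_def using knp chi_convex by simp
    have fC: "v \<in> C \<Longrightarrow> f v = knp / 2 * (snd w $ v)^2" for v
      unfolding f_def using chi_neg_exact[of "snd q0 $ v" "snd w $ v"] C[of v] by simp
    have "knp / 2 * (\<Sum>v\<in>C. (snd w $ v)^2) = (\<Sum>v\<in>C. knp / 2 * (snd w $ v)^2)" by (simp add: sum_distrib_left)
    also have "\<dots> = (\<Sum>v\<in>C. f v)" using fC by (intro sum.cong) auto
    also have "\<dots> \<le> (\<Sum>v\<in>UNIV. f v)" using f0 by (intro sum_mono2) auto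
    finally show ?thesis unfolding f_def .
  qed
  show ?thesis using eq e1 e2 unfolding s_def u_def B_def by simp
qed


definition XX :: "3 \<Rightarrow> redconfig \<Rightarrow> real" where
  "XX v h = (if v = 1 then 0 else if v = 2 then fst (fst h) else snd (fst h))"

lemma lift_fst: "fst (lift_section h) $ v = XX v h"
  using exhaust_3[of v] by (auto simp: lift_section_def XX_def)

lemma lift_snd: "snd (lift_section h) = snd h"
  by (simp add: lift_section_def)

lemma lift_add: "lift_section (p + h) = lift_section p + lift_section h"
  by (simp add: lift_section_def prod_eq_iff vec_eq_iff forall_3)

lemma lift_scale: "lift_section (c *\<^sub>R h) = c *\<^sub>R lift_section h"
  by (simp add: lift_section_def prod_eq_iff vec_eq_iff forall_3)

lemma proj_lift: "proj (lift_section y) = y"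
  by (simp add: proj_def lift_section_def prod_eq_iff)

lemma lift_proj: "fst q $ 1 = 0 \<Longrightarrow> lift_section (proj q) = q"
  by (simp add: proj_def lift_section_def prod_eq_iff vec_eq_iff forall_3)

lemma nfst: "norm (fst h) \<le> norm h" by (metis norm_fst_le prod.collapse)
lemma nsnd: "norm (snd h) \<le> norm h" by (metis norm_snd_le prod.collapse)

lemma XX_le: "\<bar>XX v h\<bar> \<le> norm h"
proof -
  have a: "\<bar>fst (fst h)\<bar> \<le> norm h" "\<bar>snd (fst h)\<bar> \<le> norm h"
    using nfst[of "fst h"] nsnd[of "fst h"] nfst[of h] by auto
  then show ?thesis by (auto simp: XX_def)
qed

lemma ZZ_le: "\<bar>snd h $ v\<bar> \<le> norm h"
  using component_le_norm_cart[of "snd h" v] nsnd[of h] by simp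

lemma pos_lift_le: "norm (pos (lift_section h) v) \<le> norm h"
proof -
  have "norm (pos (lift_section h) v) = sqrt ((XX v h)^2 + (snd h $ v)^2)"
    by (simp add: pos_def lift_fst lift_snd norm_pair_real)
  also have "\<dots> \<le> sqrt (norm (fst h) ^ 2 + norm (snd h) ^ 2)"
  proof -
    have "(XX v h)^2 \<le> norm (fst h) ^ 2"
    proof -
      have "\<bar>fst (fst h)\<bar> \<le> norm (fst h)" "\<bar>snd (fst h)\<bar> \<le> norm (fst h)"
        using nfst[of "fst h"] nsnd[of "fst h"] by auto
      then have "\<bar>XX v h\<bar> \<le> norm (fst h)" by (auto simp: XX_def)
      then show ?thesis by (metis abs_ge_zero power2_abs power_mono)
    qed
    moreover have "(snd h $ v)^2 \<le> norm (snd h) ^ 2"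
      using component_le_norm_cart[of "snd h" v] by (metis abs_ge_zero power2_abs power_mono real_norm_def)
    ultimately show ?thesis by simp
  qed
  also have "\<dots> = norm h" by (simp add: norm_Pair[symmetric])
  finally show ?thesis .
qed

lemma dp_lift_le: "norm (dp (lift_section h) e) \<le> 2 * norm h"
  unfolding dp_def using norm_triangle_ineq4[of "pos (lift_section h) (fst (edge_ends e))" "pos (lift_section h) (snd (edge_ends e))"]
    pos_lift_le[of h "fst (edge_ends e)"] pos_lift_le[of h "snd (edge_ends e)"] by linarith

definition FF :: "3 \<Rightarrow> 3 \<Rightarrow> 3 \<Rightarrow> par \<Rightarrow> redconfig \<Rightarrow> real" where
  "FF i j k y h =
     ((Pjx y * (XX i h - XX j h) + Pjz y * (snd h $ i - snd h $ j)) / lk y)^2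
   + ((Pkx y * (XX i h - XX k h) + Pkz y * (snd h $ i - snd h $ k)) / lj y)^2
   + (((Pkx y - Pjx y) * (XX j h - XX k h) + (Pkz y - Pjz y) * (snd h $ j - snd h $ k)) / li y)^2
   + (snd h $ i)^2 + (snd h $ j)^2"

lemma sc_aux: "((P*(c*a - c*b) + Q*(c*d - c*e))/L)^2 = c^2 * ((P*(a-b) + Q*(d-e))/(L::real))^2"
proof -
  have "P*(c*a - c*b) + Q*(c*d - c*e) = c * (P*(a-b) + Q*(d-e))" by (simp add: algebra_simps)
  then show ?thesis by (simp add: power_mult_distrib power_divide)
qed

lemma XX_scale: "XX v (c *\<^sub>R h) = c * XX v h" by (simp add: XX_def)

lemma FF_scale: "FF i j k y (c *\<^sub>R h) = c^2 * FF i j k y h"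
proof -
  have a: "XX v (c *\<^sub>R h) = c * XX v h" "snd (c *\<^sub>R h) $ v = c * snd h $ v" for v
    by (simp_all add: XX_def)
  show ?thesis
    unfolding FF_def a sc_aux by (simp only: power_mult_distrib distrib_left)
qed

lemma FF_nonneg: "FF i j k y h \<ge> 0" by (simp add: FF_def)

lemma FF_pos:
  assumes dis: "distinct [i,j,k::3]" and g: "good y" and h: "h \<noteq> 0"
  shows "FF i j k y h > 0"
proof (rule ccontr)
  assume "\<not> FF i j k y h > 0"
  then have F0: "FF i j k y h = 0" using FF_nonneg[of i j k y h] by simp
  define Xi where "Xi = XX i h" define Xj where "Xj = XX j h" define Xk where "Xk = XX k h"
  define Zi where "Zi = snd h $ i" define Zj where "Zj = snd h $ j" define Zk where "Zk = snd h $ k"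
  have gl: "li y > 0" "lj y > 0" "lk y > 0" "dt y \<noteq> 0" using g by (auto simp: good_def)
  have c: "cc y > 0" using good_cc[OF g] .
  have sq: "a^2 + b^2 + c^2 + d^2 + e^2 = (0::real) \<Longrightarrow> a = 0 \<and> b = 0 \<and> c = 0 \<and> d = 0 \<and> e = 0" for a b c d e
  proof -
    assume H: "a^2 + b^2 + c^2 + d^2 + e^2 = (0::real)"
    have p: "a^2 \<ge> 0" "b^2 \<ge> 0" "c^2 \<ge> 0" "d^2 \<ge> 0" "e^2 \<ge> 0" by simp_all
    then have "a^2 = 0" "b^2 = 0" "c^2 = 0" "d^2 = 0" "e^2 = 0" using H by linarith+
    then show ?thesis by simp
  qed
  from sq[OF F0[unfolded FF_def]] have
    e1: "Pjx y * (Xi - Xj) + Pjz y * (Zi - Zj) = 0" and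
    e2: "Pkx y * (Xi - Xk) + Pkz y * (Zi - Zk) = 0" and
    e3: "(Pkx y - Pjx y) * (Xj - Xk) + (Pkz y - Pjz y) * (Zj - Zk) = 0" and
    z: "Zi = 0" "Zj = 0"
    using gl by (auto simp: Xi_def Xj_def Xk_def Zi_def Zj_def Zk_def)
  have "lk y * cc y * (Xi - Xj) = 0" using e1 z by (simp add: Pjx_def)
  then have xij: "Xj = Xi" using gl c by simp
  define a where "a = Xi - Xk"
  define b where "b = - Zk"
  have s1: "Pkx y * a + Pkz y * b = 0" using e2 z by (simp add: a_def b_def)
  have s2: "(Pkx y - Pjx y) * a + (Pkz y - Pjz y) * b = 0" using e3 z xij by (simp add: a_def b_def)
  have det: "Pkx y * (Pkz y - Pjz y) - Pkz y * (Pkx y - Pjx y) = lj y * li y * dt y"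
    using gl by (simp add: dt_def Ax_def Az_def Bx_def Bz_def field_simps)
  have dnz: "Pkx y * (Pkz y - Pjz y) - Pkz y * (Pkx y - Pjx y) \<noteq> 0" using det gl by simp
  have "a * (Pkx y * (Pkz y - Pjz y) - Pkz y * (Pkx y - Pjx y)) = 0"
    using s1 s2 by (smt (verit) mult.commute mult.left_commute right_diff_distrib)
  then have a0: "a = 0" using dnz by simp
  have "b * (Pkx y * (Pkz y - Pjz y) - Pkz y * (Pkx y - Pjx y)) = 0"
    using s1 s2 by (smt (verit) mult.commute mult.left_commute right_diff_distrib)
  then have b0: "b = 0" using dnz by simp
  have allx: "XX v h = Xi" and allz: "snd h $ v = 0" for v
  proof -
    have "v = i \<or> v = j \<or> v = k" using UNIV3_dist[OF dis] by auto
    then show "XX v h = Xi" "snd h $ v = 0" using xij a0 b0 z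
      by (auto simp: a_def b_def Xi_def Xj_def Xk_def Zi_def Zj_def Zk_def)
  qed
  have "XX 1 h = 0" by (simp add: XX_def)
  then have X0: "Xi = 0" using allx[of 1] by simp
  have "fst (fst h) = 0" using allx[of 2] X0 by (simp add: XX_def)
  moreover have "snd (fst h) = 0" using allx[of 3] X0 by (simp add: XX_def)
  moreover have "snd h = 0" using allz by (simp add: vec_eq_iff)
  ultimately have "h = 0" by (simp add: prod_eq_iff)
  then show False using h by simp
qed


lemma c_XX[continuous_intros]: "continuous F g \<Longrightarrow> continuous F (\<lambda>x. XX v (g x))"
  by (cases "v = 1"; cases "v = 2") (auto simp: XX_def intro!: continuous_intros)

lemma cfst:
  fixes f :: "par \<Rightarrow> real" and p :: "par \<times> redconfig"
  assumes "continuous (at (fst p)) f"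
  shows "continuous (at p within S) (\<lambda>p. f (fst p))"
  by (rule continuous_within_compose3[where g=f and f=fst, OF assms]) (intro continuous_intros)

lemma FF_lower:
  assumes dis: "distinct [i,j,k::3]" and gd: "\<And>y. y \<in> cball y0 r \<Longrightarrow> good y" and r: "r \<ge> 0"
  obtains c0 where "c0 > 0" "\<And>y h. y \<in> cball y0 r \<Longrightarrow> FF i j k y h \<ge> c0 * norm h ^ 2"
proof -
  let ?K = "cball y0 r \<times> sphere (0::redconfig) 1"
  have cK: "compact ?K" by (intro compact_Times compact_cball compact_sphere)
  have neK: "?K \<noteq> {}"
  proof -
    obtain b :: redconfig where "b \<in> Basis" using nonempty_Basis by blast
    then have "(y0, b) \<in> ?K" using r by auto
    then show ?thesis by blast
  qed
  have cont: "continuous_on ?K (\<lambda>p. FF i j k (fst p) (snd p))"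
  proof (intro continuous_at_imp_continuous_on ballI)
    fix p assume "p \<in> ?K"
    then have g: "good (fst p)" using gd by auto
    then have nz: "li (fst p) \<noteq> 0" "lj (fst p) \<noteq> 0" "lk (fst p) \<noteq> 0" by (auto simp: good_def)
    have c: "continuous (at p) (\<lambda>p. li (fst p))" "continuous (at p) (\<lambda>p. lj (fst p))"
      "continuous (at p) (\<lambda>p. lk (fst p))" "continuous (at p) (\<lambda>p. Pjx (fst p))"
      "continuous (at p) (\<lambda>p. Pjz (fst p))" "continuous (at p) (\<lambda>p. Pkx (fst p))"
      "continuous (at p) (\<lambda>p. Pkz (fst p))"
      using nz by (auto intro!: cfst continuous_intros)
    show "continuous (at p) (\<lambda>p. FF i j k (fst p) (snd p))"
      unfolding FF_def using c nz by (intro continuous_intros) auto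
  qed
  obtain m where m: "m \<in> ?K" "\<And>p. p \<in> ?K \<Longrightarrow> FF i j k (fst m) (snd m) \<le> FF i j k (fst p) (snd p)"
    using continuous_attains_inf[OF cK neK cont] by blast
  define c0 where "c0 = FF i j k (fst m) (snd m)"
  have c0: "c0 > 0" unfolding c0_def
    using m(1) gd by (intro FF_pos[OF dis]) auto
  show ?thesis
  proof (rule that[OF c0])
    fix y h assume y: "y \<in> cball y0 r"
    show "FF i j k y h \<ge> c0 * norm h ^ 2"
    proof (cases "h = 0")
      case True
      then show ?thesis using FF_nonneg by simp
    next
      case False
      define u where "u = (1 / norm h) *\<^sub>R h"
      have "(y, u) \<in> ?K" using y False by (simp add: u_def)
      then have "c0 \<le> FF i j k y u" using m(2)[of "(y,u)"] by (simp add: c0_def)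
      moreover have "h = norm h *\<^sub>R u" using False by (simp add: u_def)
      then have "FF i j k y h = norm h ^ 2 * FF i j k y u" by (metis FF_scale)
      ultimately show ?thesis by (metis mult.commute mult_left_mono zero_le_power2)
    qed
  qed
qed


lemma nondeg_from_growth:
  fixes f :: "'a::euclidean_space \<Rightarrow> real"
  assumes S: "open S" "p \<in> S" "S \<subseteq> D"
    and der: "\<And>y. y \<in> S \<Longrightarrow> (f has_derivative (\<lambda>h. g y \<bullet> h)) (at y)"
    and gd: "g differentiable (at p)" and g0: "g p = 0"
    and gam: "\<gamma> > 0" and gr: "\<And>y. y \<in> S \<Longrightarrow> f y - f p \<ge> \<gamma> * norm (y - p) ^ 2"
  shows "nondeg_local_min f D p"
proof -
  obtain H where H: "(g has_derivative H) (at p)" using gd unfolding differentiable_def by blast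
  have lin: "linear H" using H has_derivative_linear by blast
  have pd: "h \<bullet> H h > 0" if h0: "h \<noteq> 0" for h
  proof (rule ccontr)
    assume "\<not> h \<bullet> H h > 0"
    then have neg: "h \<bullet> H h \<le> 0" by simp
    obtain dS where dS: "dS > 0" "ball p dS \<subseteq> S" using S openE by blast
    obtain d where d: "d > 0" "\<And>y. norm (y - p) < d \<Longrightarrow> norm (g y - g p - H (y - p)) \<le> \<gamma> * norm (y - p)"
      using H gam unfolding has_derivative_at_alt by blast
    have nh: "norm h > 0" using h0 by simp
    define t where "t = min dS d / (2 * norm h)"
    have t0: "t > 0" using dS d nh by (simp add: t_def)
    have inS: "p + s *\<^sub>R h \<in> S" and small: "norm ((p + s *\<^sub>R h) - p) < d" if "0 \<le> s" "s \<le> t" for s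
    proof -
      have "norm (s *\<^sub>R h) = s * norm h" using that by simp
      also have "\<dots> \<le> t * norm h" using that nh by (simp add: mult_right_mono)
      also have "\<dots> = min dS d / 2" using nh by (simp add: t_def)
      finally have le: "norm (s *\<^sub>R h) \<le> min dS d / 2" .
      then have "norm (s *\<^sub>R h) < dS" using dS d by linarith
      then show "p + s *\<^sub>R h \<in> S" using dS(2) by (auto simp: dist_norm)
      show "norm ((p + s *\<^sub>R h) - p) < d" using le dS d by simp
    qed
    define phi where "phi s = f (p + s *\<^sub>R h)" for s
    have dphi: "DERIV phi s :> g (p + s *\<^sub>R h) \<bullet> h" if "0 \<le> s" "s \<le> t" for s
    proof -
      have d1: "((\<lambda>s. p + s *\<^sub>R h) has_derivative (\<lambda>s. s *\<^sub>R h)) (at s)"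
        by (auto intro!: derivative_eq_intros)
      have "((\<lambda>s. f (p + s *\<^sub>R h)) has_derivative (\<lambda>x. g (p + s *\<^sub>R h) \<bullet> (x *\<^sub>R h))) (at s)"
        using has_derivative_compose[OF d1 der[OF inS[OF that]]] by simp
      then show ?thesis unfolding phi_def has_field_derivative_def
        by (rule has_derivative_eq_rhs) (auto simp: fun_eq_iff)
    qed
    obtain xi where xi: "0 < xi" "xi < t" "phi t - phi 0 = (t - 0) * (g (p + xi *\<^sub>R h) \<bullet> h)"
      using MVT2[OF t0, of phi "\<lambda>s. g (p + s *\<^sub>R h) \<bullet> h"] dphi by auto
    have "g (p + xi *\<^sub>R h) \<bullet> h = (g (p + xi *\<^sub>R h) - g p - H (xi *\<^sub>R h)) \<bullet> h + xi * (h \<bullet> H h)"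
      using g0 linear_scale[OF lin] by (simp add: inner_diff_left inner_diff_right inner_commute)
    also have "\<dots> \<le> \<gamma> * (xi * norm h) * norm h + 0"
    proof (rule add_mono)
      have "(g (p + xi *\<^sub>R h) - g p - H (xi *\<^sub>R h)) \<bullet> h \<le> norm (g (p + xi *\<^sub>R h) - g p - H (xi *\<^sub>R h)) * norm h"
        by (rule norm_cauchy_schwarz)
      also have "\<dots> \<le> (\<gamma> * norm (xi *\<^sub>R h)) * norm h"
        using d(2)[OF small[of xi]] xi by (intro mult_right_mono) auto
      finally show "(g (p + xi *\<^sub>R h) - g p - H (xi *\<^sub>R h)) \<bullet> h \<le> \<gamma> * (xi * norm h) * norm h"
        using xi by simp
      show "xi * (h \<bullet> H h) \<le> 0" using xi neg by (simp add: mult_nonneg_nonpos)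
    qed
    finally have up: "g (p + xi *\<^sub>R h) \<bullet> h \<le> \<gamma> * xi * norm h ^ 2" by (simp add: power2_eq_square)
    have "phi t - phi 0 \<le> t * (\<gamma> * xi * norm h ^ 2)" using xi up t0 by (simp add: mult_left_mono)
    also have "\<dots> < t * (\<gamma> * t * norm h ^ 2)" using xi t0 gam nh by (simp add: mult_strict_right_mono)
    finally have a: "phi t - phi 0 < \<gamma> * (t * norm h) ^ 2" by (simp add: power2_eq_square algebra_simps)
    have "phi t - phi 0 \<ge> \<gamma> * norm ((p + t *\<^sub>R h) - p) ^ 2"
      using gr[OF inS[of t]] t0 by (simp add: phi_def)
    then have "phi t - phi 0 \<ge> \<gamma> * (t * norm h) ^ 2" using t0 by simp
    then show False using a by simp
  qed
  show ?thesis unfolding nondeg_local_min_def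
  proof (intro conjI exI)
    show "p \<in> D" using S by auto
    show "open S" "p \<in> S" "S \<subseteq> D" by (fact S)+
    show "\<forall>y\<in>S. (f has_derivative (\<lambda>h. g y \<bullet> h)) (at y)" using der by auto
    show "(g has_derivative H) (at p)" by (fact H)
    show "g p = 0" by (fact g0)
    show "\<forall>h. h \<noteq> 0 \<longrightarrow> h \<bullet> H h > 0" using pd by auto
    show "\<forall>y\<in>S. f p \<le> f y" using gr gam by (smt (verit) mult_nonneg_nonneg zero_le_power2)
  qed
qed


lemma dp_scale: "dp (c *\<^sub>R q) e = c *\<^sub>R dp q e"
  by (simp add: dp_def pos_def prod_eq_iff algebra_simps)

lemma lin_lift: "linear lift_section"
  by (intro linearI) (simp_all add: lift_add lift_scale)

lemma bl_lift: "bounded_linear lift_section"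
  using lin_lift linear_conv_bounded_linear by blast

lemma bl_dp: "bounded_linear (\<lambda>q. dp q e)"
proof -
  have "linear (\<lambda>q. dp q e)" by (intro linearI) (simp_all add: dp_add dp_scale)
  then show ?thesis using linear_conv_bounded_linear by blast
qed

lemma bl_z: "bounded_linear (\<lambda>q::config. snd q $ v)"
proof -
  have "linear (\<lambda>q::config. snd q $ v)" by (intro linearI) simp_all
  then show ?thesis using linear_conv_bounded_linear by blast
qed

lemma d_dp: "((\<lambda>q. dp q e) has_derivative (\<lambda>w. dp w e)) (at q)"
  using bounded_linear.has_derivative[OF bl_dp has_derivative_ident] by simp

lemma d_z: "((\<lambda>q::config. snd q $ v) has_derivative (\<lambda>w. snd w $ v)) (at q)"
  using bounded_linear.has_derivative[OF bl_z has_derivative_ident] by simp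

definition DU :: "real \<Rightarrow> real \<Rightarrow> (3 \<Rightarrow> real) \<Rightarrow> config \<Rightarrow> config \<Rightarrow> real" where
  "DU ks knp lbar q w = ks * (\<Sum>e\<in>UNIV. (ell q e - lbar e) * (dp q e \<bullet> dp w e) / ell q e)
      + knp * (\<Sum>v\<in>UNIV. min (snd q $ v) 0 * snd w $ v) + (\<Sum>v\<in>UNIV. snd w $ v)"

lemma d_ell:
  assumes "ell q e \<noteq> 0"
  shows "((\<lambda>q. ell q e) has_derivative (\<lambda>w. (dp q e \<bullet> dp w e) / ell q e)) (at q)"
proof -
  have nz: "dp q e \<noteq> 0" using assms by (auto simp: ell_dp)
  have "((\<lambda>q. norm (dp q e)) has_derivative (\<lambda>w. dp w e \<bullet> sgn (dp q e))) (at q)"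
    using has_derivative_compose[OF d_dp has_derivative_norm[OF nz]] by simp
  then show ?thesis unfolding ell_dp
    by (rule has_derivative_eq_rhs) (simp add: fun_eq_iff sgn_div_norm inner_commute field_simps)
qed

lemma d_chi:
  "((\<lambda>q::config. chi (snd q $ v)) has_derivative (\<lambda>w. min (snd q $ v) 0 * snd w $ v)) (at q)"
proof -
  have c: "(chi has_derivative (\<lambda>x. min (snd q $ v) 0 * x)) (at (snd q $ v))"
    using chi_deriv[of "snd q $ v"] unfolding has_field_derivative_def by simp
  show ?thesis
    using has_derivative_compose[OF d_z c] by simp
qed

lemma U_deriv:
  assumes "\<And>e. ell q e \<noteq> 0"
  shows "(U ks knp lbar has_derivative DU ks knp lbar q) (at q)"
proof -
  have s1: "((\<lambda>q. (\<Sum>e\<in>UNIV. (ell q e - lbar e)^2)) has_derivative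
     (\<lambda>w. \<Sum>e\<in>UNIV. 2 * (ell q e - lbar e) * ((dp q e \<bullet> dp w e) / ell q e))) (at q)"
  proof (rule has_derivative_sum)
    fix e :: 3
    show "((\<lambda>q. (ell q e - lbar e)^2) has_derivative (\<lambda>w. 2 * (ell q e - lbar e) * ((dp q e \<bullet> dp w e) / ell q e))) (at q)"
      using d_ell[OF assms[of e]]
      by (auto intro!: derivative_eq_intros simp: fun_eq_iff)
  qed
  have s2: "((\<lambda>q::config. (\<Sum>v\<in>UNIV. chi (snd q $ v))) has_derivative
     (\<lambda>w. \<Sum>v\<in>UNIV. min (snd q $ v) 0 * snd w $ v)) (at q)"
    by (rule has_derivative_sum) (rule d_chi)
  have s3: "((\<lambda>q::config. (\<Sum>v\<in>UNIV. snd q $ v)) has_derivative (\<lambda>w. \<Sum>v\<in>UNIV. snd w $ v)) (at q)"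
    by (rule has_derivative_sum) (rule d_z)
  have "((\<lambda>q. ks / 2 * (\<Sum>e\<in>UNIV. (ell q e - lbar e)^2) + knp * (\<Sum>v\<in>UNIV. chi (snd q $ v)) + (\<Sum>v\<in>UNIV. snd q $ v))
     has_derivative (\<lambda>w. ks / 2 * (\<Sum>e\<in>UNIV. 2 * (ell q e - lbar e) * ((dp q e \<bullet> dp w e) / ell q e))
        + knp * (\<Sum>v\<in>UNIV. min (snd q $ v) 0 * snd w $ v) + (\<Sum>v\<in>UNIV. snd w $ v))) (at q)"
    by (intro has_derivative_add has_derivative_mult_right s1 s2 s3)
  moreover have "(\<lambda>w. ks / 2 * (\<Sum>e\<in>UNIV. 2 * (ell q e - lbar e) * ((dp q e \<bullet> dp w e) / ell q e))
        + knp * (\<Sum>v\<in>UNIV. min (snd q $ v) 0 * snd w $ v) + (\<Sum>v\<in>UNIV. snd w $ v)) = DU ks knp lbar q"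
  proof (rule ext)
    fix w
    have "ks / 2 * (\<Sum>e\<in>UNIV. 2 * (ell q e - lbar e) * ((dp q e \<bullet> dp w e) / ell q e))
       = ks * (\<Sum>e\<in>UNIV. (ell q e - lbar e) * (dp q e \<bullet> dp w e) / ell q e)"
    proof -
      have "ks / 2 * (2 * (ell q e - lbar e) * ((dp q e \<bullet> dp w e) / ell q e))
          = ks * ((ell q e - lbar e) * (dp q e \<bullet> dp w e) / ell q e)" for e
        by (cases "ell q e = 0") (simp_all add: field_simps)
      then show ?thesis by (simp only: sum_distrib_left)
    qed
    then show "ks / 2 * (\<Sum>e\<in>UNIV. 2 * (ell q e - lbar e) * ((dp q e \<bullet> dp w e) / ell q e))
        + knp * (\<Sum>v\<in>UNIV. min (snd q $ v) 0 * snd w $ v) + (\<Sum>v\<in>UNIV. snd w $ v) = DU ks knp lbar q w"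
      by (simp add: DU_def)
  qed
  ultimately have "((\<lambda>q. ks / 2 * (\<Sum>e\<in>UNIV. (ell q e - lbar e)^2) + knp * (\<Sum>v\<in>UNIV. chi (snd q $ v)) + (\<Sum>v\<in>UNIV. snd q $ v))
     has_derivative DU ks knp lbar q) (at q)" by simp
  then show ?thesis unfolding U_def[abs_def] .
qed


lemma d_lift: "(lift_section has_derivative lift_section) (at y)"
  using bounded_linear.has_derivative[OF bl_lift has_derivative_ident] by simp

lemma Uhat_deriv:
  assumes "\<And>e. ell (lift_section y) e \<noteq> 0"
  shows "(Uhat ks knp lbar has_derivative (\<lambda>h. DU ks knp lbar (lift_section y) (lift_section h))) (at y)"
  unfolding Uhat_def[abs_def] using has_derivative_compose[OF d_lift U_deriv[OF assms]] by simp

lemma linear_grad: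
  fixes L :: "'a::euclidean_space \<Rightarrow> real"
  assumes "linear L"
  shows "L h = (\<Sum>b\<in>Basis. L b *\<^sub>R b) \<bullet> h"
proof -
  have "L h = L (\<Sum>b\<in>Basis. (h \<bullet> b) *\<^sub>R b)" by (simp add: euclidean_representation)
  also have "\<dots> = (\<Sum>b\<in>Basis. (h \<bullet> b) * L b)"
    using assms by (simp add: linear_sum linear_scale)
  also have "\<dots> = (\<Sum>b\<in>Basis. L b * (b \<bullet> h))"
    by (intro sum.cong) (simp_all add: inner_commute)
  also have "\<dots> = (\<Sum>b\<in>Basis. L b *\<^sub>R b) \<bullet> h"
    by (simp add: inner_sum_left)
  finally show ?thesis .
qed

definition gradU :: "real \<Rightarrow> real \<Rightarrow> (3 \<Rightarrow> real) \<Rightarrow> redconfig \<Rightarrow> redconfig" where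
  "gradU ks knp lbar y = (\<Sum>b\<in>Basis. DU ks knp lbar (lift_section y) (lift_section b) *\<^sub>R b)"

lemma Uhat_grad:
  assumes "\<And>e. ell (lift_section y) e \<noteq> 0"
  shows "(Uhat ks knp lbar has_derivative (\<lambda>h. gradU ks knp lbar y \<bullet> h)) (at y)"
proof -
  note D = Uhat_deriv[OF assms, of ks knp lbar]
  have lin: "linear (\<lambda>h. DU ks knp lbar (lift_section y) (lift_section h))"
    using has_derivative_linear[OF D] .
  have "(\<lambda>h. DU ks knp lbar (lift_section y) (lift_section h)) = (\<lambda>h. gradU ks knp lbar y \<bullet> h)"
    unfolding gradU_def by (rule ext) (rule linear_grad[OF lin])
  then show ?thesis using D by simp
qed

lemma diff_ell:
  assumes "ell (lift_section p) e \<noteq> 0"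
  shows "(\<lambda>y. ell (lift_section y) e) differentiable (at p)"
proof -
  have nz: "dp (lift_section p) e \<noteq> 0" using assms by (auto simp: ell_dp)
  have a: "(\<lambda>y. dp (lift_section y) e) differentiable (at p)"
    using bounded_linear_imp_differentiable[OF bounded_linear_compose[OF bl_dp bl_lift]] by (simp add: o_def)
  show ?thesis unfolding ell_dp
    by (rule differentiable_compose[of norm, OF _ a]) (simp add: nz)
qed

lemma diff_dpin: "(\<lambda>y. dp (lift_section y) e \<bullet> c) differentiable (at p)"
proof -
  have "bounded_linear (\<lambda>y. dp (lift_section y) e \<bullet> c)"
    using bounded_linear_compose[OF bounded_linear_inner_left bounded_linear_compose[OF bl_dp bl_lift]]
    by (simp add: o_def)
  then show ?thesis by (rule bounded_linear_imp_differentiable)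
qed

lemma bl_zr: "bounded_linear (\<lambda>y::redconfig. snd y $ v)"
proof -
  have "linear (\<lambda>y::redconfig. snd y $ v)" by (intro linearI) simp_all
  then show ?thesis using linear_conv_bounded_linear by blast
qed

lemma diff_min:
  assumes "snd p $ v \<noteq> 0"
  shows "(\<lambda>y::redconfig. min (snd (lift_section y) $ v) 0) differentiable (at p)"
proof (cases "snd p $ v < 0")
  case True
  have op: "open {y::redconfig. snd y $ v < 0}"
    using open_Collect_less[of "\<lambda>y::redconfig. snd y $ v" "\<lambda>_. 0"]
    by (simp add: linear_continuous_on[OF bl_zr])
  have "((\<lambda>y::redconfig. snd y $ v) has_derivative (\<lambda>y. snd y $ v)) (at p)"
    using bounded_linear.has_derivative[OF bl_zr has_derivative_ident] by simp
  then have "((\<lambda>y::redconfig. min (snd (lift_section y) $ v) 0) has_derivative (\<lambda>y. snd y $ v)) (at p)"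
    by (rule has_derivative_transform_within_open[OF _ op]) (use True in \<open>auto simp: lift_snd\<close>)
  then show ?thesis unfolding differentiable_def by blast
next
  case False
  then have pos: "snd p $ v > 0" using assms by simp
  have op: "open {y::redconfig. 0 < snd y $ v}"
    using open_Collect_less[of "\<lambda>_. 0" "\<lambda>y::redconfig. snd y $ v"]
    by (simp add: linear_continuous_on[OF bl_zr])
  have "((\<lambda>y::redconfig. 0) has_derivative (\<lambda>y. 0)) (at p)" by simp
  then have "((\<lambda>y::redconfig. min (snd (lift_section y) $ v) 0) has_derivative (\<lambda>y. 0)) (at p)"
    by (rule has_derivative_transform_within_open[OF _ op]) (use pos in \<open>auto simp: lift_snd\<close>)
  then show ?thesis unfolding differentiable_def by blast
qed

lemma grad_diff:
  assumes "\<And>e. ell (lift_section p) e \<noteq> 0" "\<And>v. snd p $ v \<noteq> 0"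
  shows "gradU ks knp lbar differentiable (at p)"
proof -
  have t1: "(\<lambda>x. (ell (lift_section x) e - lbar e) * (dp (lift_section x) e \<bullet> dp w e) / ell (lift_section x) e) differentiable (at p)" for e w
    by (intro differentiable_divide differentiable_mult differentiable_diff diff_ell diff_dpin differentiable_const assms)
  have t2: "(\<lambda>x. min (snd (lift_section x) $ v) 0 * snd w $ v) differentiable (at p)" for v w
    by (intro differentiable_mult diff_min differentiable_const assms)
  have DUd: "(\<lambda>y. DU ks knp lbar (lift_section y) w) differentiable (at p)" for w
    unfolding DU_def
    by (intro differentiable_add differentiable_mult differentiable_sum differentiable_const ballI t1 t2 finite_class.finite_UNIV)
  show ?thesis unfolding gradU_def[abs_def]
    by (intro differentiable_sum differentiable_scaleR DUd differentiable_const ballI finite_Basis)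
qed


lemma ell_dot_dp: "ell_dot q v e = (dp q e \<bullet> dp v e) / norm (dp q e)"
  by (simp add: ell_dot_def dp_def case_prod_beta)

lemma sum_nonneg_zero:
  fixes f :: "3 \<Rightarrow> real"
  assumes "\<And>x. f x \<ge> 0" "(\<Sum>x\<in>UNIV. f x) \<le> 0"
  shows "f x = 0"
proof -
  have "(\<Sum>x\<in>UNIV. f x) = 0" using assms sum_nonneg[of UNIV f] by (simp add: order_antisym)
  then show ?thesis using sum_nonneg_eq_0_iff[of UNIV f] assms by auto
qed

lemma R_pos:
  assumes dis: "distinct [i,j,k::3]" and zi: "snd q $ i < 0" and zj: "snd q $ j < 0"
    and cr: "fst (pos q i - pos q k) * snd (pos q j - pos q k) - snd (pos q i - pos q k) * fst (pos q j - pos q k) \<noteq> 0"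
    and nu: "\<nu>s > 0" "\<nu>ns > 0" "\<nu>db > 0" and v0: "v \<noteq> 0"
  shows "R_total \<nu>s \<nu>ns \<nu>db q v > 0"
proof (rule ccontr)
  assume "\<not> R_total \<nu>s \<nu>ns \<nu>db q v > 0"
  then have le: "R_shape \<nu>s q v + R_ns \<nu>ns q v + R_db \<nu>db q v \<le> 0" by (simp add: R_total_def)
  define f1 where "f1 e = (ell_dot q v e)^2" for e
  define f2 where "f2 x = - min (snd q $ x) 0 * (fst v $ x)^2" for x
  define f3 where "f3 x = chi (snd q $ x) * (snd v $ x)^2" for x
  have f1p: "f1 x \<ge> 0" and f2p: "f2 x \<ge> 0" and f3p: "f3 x \<ge> 0" for x
    by (auto simp: f1_def f2_def f3_def chi_nonneg mult_nonpos_nonneg intro!: mult_nonneg_nonneg)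
  have R1: "R_shape \<nu>s q v = \<nu>s / 2 * (\<Sum>x\<in>UNIV. f1 x)" by (simp add: R_shape_def f1_def)
  have R2: "R_ns \<nu>ns q v = \<nu>ns / 2 * (\<Sum>x\<in>UNIV. f2 x)"
    by (simp add: R_ns_def f2_def deriv_chi sum_distrib_left sum_negf)
  have R3: "R_db \<nu>db q v = \<nu>db / 2 * (\<Sum>x\<in>UNIV. f3 x)" by (simp add: R_db_def f3_def)
  have s1: "(\<Sum>x\<in>UNIV. f1 x) \<ge> 0" "(\<Sum>x\<in>UNIV. f2 x) \<ge> 0" "(\<Sum>x\<in>UNIV. f3 x) \<ge> 0"
    using f1p f2p f3p by (auto intro: sum_nonneg)
  have "\<nu>s / 2 * (\<Sum>x\<in>UNIV. f1 x) \<ge> 0" "\<nu>ns / 2 * (\<Sum>x\<in>UNIV. f2 x) \<ge> 0" "\<nu>db / 2 * (\<Sum>x\<in>UNIV. f3 x) \<ge> 0"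
    using s1 nu by auto
  then have "\<nu>s / 2 * (\<Sum>x\<in>UNIV. f1 x) \<le> 0" "\<nu>ns / 2 * (\<Sum>x\<in>UNIV. f2 x) \<le> 0" "\<nu>db / 2 * (\<Sum>x\<in>UNIV. f3 x) \<le> 0"
    using le R1 R2 R3 by linarith+
  then have "(\<Sum>x\<in>UNIV. f1 x) \<le> 0" "(\<Sum>x\<in>UNIV. f2 x) \<le> 0" "(\<Sum>x\<in>UNIV. f3 x) \<le> 0"
    using nu by (auto simp: mult_le_0_iff)
  then have S: "(\<Sum>x\<in>UNIV. f1 x) \<le> 0" "(\<Sum>x\<in>UNIV. f2 x) \<le> 0" "(\<Sum>x\<in>UNIV. f3 x) \<le> 0" by auto
  have z1: "f1 x = 0" for x using sum_nonneg_zero[of f1 x] f1p S(1) by blast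
  have z2: "f2 x = 0" for x using sum_nonneg_zero[of f2 x] f2p S(2) by blast
  have z3: "f3 x = 0" for x using sum_nonneg_zero[of f3 x] f3p S(3) by blast
  have xi: "fst v $ i = 0" "fst v $ j = 0" using z2[of i] z2[of j] zi zj by (auto simp: f2_def)
  have chp: "chi (snd q $ i) > 0" "chi (snd q $ j) > 0" using zi zj by (auto simp: chi_def)
  have zv: "snd v $ i = 0" "snd v $ j = 0" using z3[of i] z3[of j] chp by (auto simp: f3_def)
  have pvi: "pos v i = 0" "pos v j = 0" using xi zv by (auto simp: pos_def zero_prod_def)
  define a where "a = pos q i - pos q k"
  define b where "b = pos q j - pos q k"
  have ab: "a \<noteq> 0" "b \<noteq> 0" using cr by (auto simp: a_def[symmetric] b_def[symmetric])
  have dis2: "distinct [i,k,j]" "distinct [j,k,i]" using dis by auto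
  have "ell_dot q v j = 0" using z1[of j] by (simp add: f1_def)
  then have "a \<bullet> (pos v i - pos v k) = 0"
    using dp_inner_role[OF dis2(1)] dp_norm_role[OF dis2(1)] ab by (simp add: ell_dot_dp a_def)
  then have ea: "a \<bullet> pos v k = 0" using pvi by simp
  have "ell_dot q v i = 0" using z1[of i] by (simp add: f1_def)
  then have "b \<bullet> (pos v j - pos v k) = 0"
    using dp_inner_role[OF dis2(2)] dp_norm_role[OF dis2(2)] ab by (simp add: ell_dot_dp b_def)
  then have eb: "b \<bullet> pos v k = 0" using pvi by simp
  define u1 where "u1 = fst (pos v k)" define u2 where "u2 = snd (pos v k)"
  have l1: "fst a * u1 + snd a * u2 = 0" using ea by (simp add: inner_prod_def u1_def u2_def)
  have l2: "fst b * u1 + snd b * u2 = 0" using eb by (simp add: inner_prod_def u1_def u2_def)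
  have D: "fst a * snd b - snd a * fst b \<noteq> 0" using cr by (simp add: a_def b_def)
  have "u1 * (fst a * snd b - snd a * fst b) = 0"
    using l1 l2 by (smt (verit) mult.commute mult.left_commute right_diff_distrib)
  then have u10: "u1 = 0" using D by simp
  have "u2 * (fst a * snd b - snd a * fst b) = 0"
    using l1 l2 by (smt (verit) mult.commute mult.left_commute right_diff_distrib)
  then have u20: "u2 = 0" using D by simp
  have pvk: "pos v k = 0" using u10 u20 by (simp add: u1_def u2_def prod_eq_iff)
  have "pos v x = 0" for x
  proof -
    have "x = i \<or> x = j \<or> x = k" using UNIV3_dist[OF dis] by auto
    then show ?thesis using pvi pvk by auto
  qed
  then have "fst v = 0" "snd v = 0" by (auto simp: pos_def vec_eq_iff prod_eq_iff)
  then show False using v0 by (simp add: prod_eq_iff)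
qed


lemma choose_labels:
  fixes lbar :: "3 \<Rightarrow> real"
  assumes "lbar 1 > 0" "lbar 2 > 0" "lbar 3 > 0"
    and "lbar 1 < lbar 2 + lbar 3" "lbar 2 < lbar 1 + lbar 3" "lbar 3 < lbar 1 + lbar 2"
  obtains i j k where "distinct [i,j,k]" "lbar i > 0" "lbar j > 0" "lbar k > 0"
    "lbar i < lbar j + lbar k" "lbar j < lbar i + lbar k" "lbar k < lbar i + lbar j"
    "lbar i \<le> lbar k" "lbar j \<le> lbar k"
proof -
  have d: "distinct [1,2,3::3]" "distinct [1,3,2::3]" "distinct [2,3,1::3]" by simp_all
  consider "lbar 1 \<le> lbar 3 \<and> lbar 2 \<le> lbar 3" | "lbar 1 \<le> lbar 2 \<and> lbar 3 \<le> lbar 2" | "lbar 2 \<le> lbar 1 \<and> lbar 3 \<le> lbar 1"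
    by linarith
  then show ?thesis
  proof cases
    case 1 then show ?thesis using that[OF d(1)] assms by auto
  next
    case 2 then show ?thesis using that[OF d(2)] assms by auto
  next
    case 3 then show ?thesis using that[OF d(3)] assms by auto
  qed
qed

lemma mk_x1: "fst (mkconf i j k a b c) $ 1 = 0"
  by (simp add: mkconf_def Let_def)

lemma third: "\<exists>e::3. e \<noteq> u \<and> e \<noteq> v"
proof (rule ccontr)
  assume "\<not> (\<exists>e::3. e \<noteq> u \<and> e \<noteq> v)"
  then have "(UNIV::3 set) \<subseteq> {u, v}" by auto
  then have "card (UNIV::3 set) \<le> card {u, v}" by (rule card_mono[rotated]) auto
  also have "\<dots> \<le> 2" by (rule card_insert_le_m1) auto
  finally show False by simp
qed

lemma edge_exists: "u \<noteq> v \<Longrightarrow> \<exists>e. edge_ends e = (u, v) \<or> edge_ends e = (v, u)"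
proof -
  assume uv: "u \<noteq> v"
  obtain e where "e \<noteq> u" "e \<noteq> v" using third by blast
  then have "distinct [u, v, e]" using uv by auto
  then show ?thesis using edge_roles by blast
qed

lemma Qspace_of_ell: "(\<And>e. ell q e \<noteq> 0) \<Longrightarrow> q \<in> Qspace"
proof -
  assume H: "\<And>e. ell q e \<noteq> 0"
  have "pos q u \<noteq> pos q v" if "u \<noteq> v" for u v
  proof -
    obtain e where "edge_ends e = (u, v) \<or> edge_ends e = (v, u)" using edge_exists[OF \<open>u \<noteq> v\<close>] by blast
    then show ?thesis using H[of e] by (auto simp: ell_def)
  qed
  then show ?thesis by (auto simp: Qspace_def)
qed

lemma proj_diff: "proj q = proj q' \<Longrightarrow> pos q u - pos q v = pos q' u - pos q' v"
proof -
  assume H: "proj q = proj q'"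
  have x: "fst q $ 2 - fst q $ 1 = fst q' $ 2 - fst q' $ 1" "fst q $ 3 - fst q $ 1 = fst q' $ 3 - fst q' $ 1"
    and z: "snd q = snd q'" using H by (auto simp: proj_def)
  have "fst q $ w - fst q' $ w = fst q $ 1 - fst q' $ 1" for w
    using exhaust_3[of w] x by auto
  then have "fst q $ u - fst q $ v = fst q' $ u - fst q' $ v"
    by (smt (verit))
  then show ?thesis using z by (simp add: pos_def)
qed

lemma sq_neg_aux: "(((- a) * x + (- b) * y) / (L::real))^2 = ((a * x + b * y) / L)^2"
proof -
  have e: "(- a) * x + (- b) * y = - (a * x + b * y)" by simp
  have f: "- (a * x + b * y) / L = - ((a * x + b * y) / L)" by (metis minus_divide_left)
  show ?thesis unfolding e f power2_minus ..
qed

lemma FF_ident: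
  assumes dis: "distinct [i,j,k::3]"
    and q0: "q0 = mkconf i j k (0, z0) (Pjx y, z0 + Pjz y) (Pkx y, z0 + Pkz y)"
    and el: "ell q0 k = lk y" "ell q0 j = lj y" "ell q0 i = li y"
  shows "(\<Sum>e\<in>UNIV. ((dp q0 e \<bullet> dp (lift_section h) e) / ell q0 e)^2)
     + (snd (lift_section h) $ i)^2 + (snd (lift_section h) $ j)^2 = FF i j k y h"
proof -
  have dis2: "distinct [i,k,j]" "distinct [j,k,i]" using dis by auto
  note mc = mk_comp[OF dis, of "(0, z0)" "(Pjx y, z0 + Pjz y)" "(Pkx y, z0 + Pkz y)"]
  note ms = pos_mk(4-6)[OF dis, of "(0, z0)" "(Pjx y, z0 + Pjz y)" "(Pkx y, z0 + Pkz y)"]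
  have tk: "dp q0 k \<bullet> dp (lift_section h) k = (- Pjx y) * (XX i h - XX j h) + (- Pjz y) * (snd h $ i - snd h $ j)"
    using dp_inner_role[OF dis, of q0 "lift_section h"] mc ms
    by (simp add: q0 pos_def lift_fst lift_snd)
  have tj: "dp q0 j \<bullet> dp (lift_section h) j = (- Pkx y) * (XX i h - XX k h) + (- Pkz y) * (snd h $ i - snd h $ k)"
    using dp_inner_role[OF dis2(1), of q0 "lift_section h"] mc ms
    by (simp add: q0 pos_def lift_fst lift_snd)
  have ti: "dp q0 i \<bullet> dp (lift_section h) i = (- (Pkx y - Pjx y)) * (XX j h - XX k h) + (- (Pkz y - Pjz y)) * (snd h $ j - snd h $ k)"
    using dp_inner_role[OF dis2(2), of q0 "lift_section h"] mc ms
    by (simp add: q0 pos_def lift_fst lift_snd algebra_simps)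
  show ?thesis
    unfolding sum3_dist[OF dis] tk tj ti el sq_neg_aux FF_def lift_snd by simp
qed


lemma growth_bound:
  fixes ks knp M m0 c0 n Zi Zj :: real and s u B :: "3 \<Rightarrow> real"
  assumes ks: "ks > 0" and knp: "knp > 0" and m0: "m0 > 0" and c0: "c0 > 0" and M: "M \<ge> 0"
    and sb: "\<And>e. \<bar>s e\<bar> \<le> M" and Bb: "\<And>e. 0 \<le> B e \<and> B e \<le> 4 * n^2 / m0"
    and FFb: "(\<Sum>e\<in>UNIV. u e ^ 2) + Zi^2 + Zj^2 \<ge> c0 * n^2"
    and K1: "12 * M / m0 \<le> min ks knp * c0 / 16"
    and K2: "24 * ks * n^4 / m0^2 \<le> min ks knp * c0 * n^2 / 16"
  shows "(\<Sum>e\<in>(UNIV::3 set). - \<bar>s e\<bar> * B e - ks / 2 * (B e)^2 + ks / 4 * (u e)^2) + knp / 2 * (Zi^2 + Zj^2)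
     \<ge> min ks knp * c0 / 8 * n^2"
proof -
  define kap where "kap = min ks knp"
  have e1: "- \<bar>s e\<bar> * B e \<ge> - (M * (4 * n^2 / m0))" for e
  proof -
    have "\<bar>s e\<bar> * B e \<le> M * (4 * n^2 / m0)" using sb[of e] Bb[of e] M by (intro mult_mono) auto
    then show ?thesis by simp
  qed
  have e2: "ks / 2 * (B e)^2 \<le> ks / 2 * (4 * n^2 / m0)^2" for e
    using Bb[of e] ks by (intro mult_left_mono power_mono) auto
  have A0: "(\<Sum>e\<in>(UNIV::3 set). - (M * (4 * n^2 / m0)) - ks / 2 * (4 * n^2 / m0)^2 + ks / 4 * (u e)^2)
      \<le> (\<Sum>e\<in>(UNIV::3 set). - \<bar>s e\<bar> * B e - ks / 2 * (B e)^2 + ks / 4 * (u e)^2)"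
    using e1 e2 by (intro sum_mono) (smt (verit))
  have A1: "(\<Sum>e\<in>(UNIV::3 set). - (M * (4 * n^2 / m0)) - ks / 2 * (4 * n^2 / m0)^2 + ks / 4 * (u e)^2)
     = 3 * (- (M * (4 * n^2 / m0)) - ks / 2 * (4 * n^2 / m0)^2) + ks / 4 * (\<Sum>e\<in>UNIV. (u e)^2)"
    by (simp add: sum.distrib sum_distrib_left)
  have A2: "3 * (- (M * (4 * n^2 / m0)) - ks / 2 * (4 * n^2 / m0)^2) = - (12 * M / m0) * n^2 - 24 * ks * n^4 / m0^2"
    by (simp add: power2_eq_square field_simps) (simp add: power4_eq_xxxx power2_eq_square)
  have A: "(\<Sum>e\<in>(UNIV::3 set). - \<bar>s e\<bar> * B e - ks / 2 * (B e)^2 + ks / 4 * (u e)^2)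
      \<ge> - (12 * M / m0) * n^2 - 24 * ks * n^4 / m0^2 + ks / 4 * (\<Sum>e\<in>UNIV. (u e)^2)"
    using A0 A1 A2 by linarith
  have "ks / 4 * (\<Sum>e\<in>UNIV. (u e)^2) + knp / 2 * (Zi^2 + Zj^2) \<ge> kap / 4 * ((\<Sum>e\<in>UNIV. (u e)^2) + Zi^2 + Zj^2)"
  proof -
    have s0: "(\<Sum>e\<in>UNIV. (u e)^2) \<ge> 0" by (simp add: sum_nonneg)
    have "ks / 4 * (\<Sum>e\<in>UNIV. (u e)^2) \<ge> kap / 4 * (\<Sum>e\<in>UNIV. (u e)^2)"
      using s0 by (intro mult_right_mono) (auto simp: kap_def)
    moreover have "knp / 2 * (Zi^2 + Zj^2) \<ge> kap / 4 * (Zi^2 + Zj^2)"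
    proof -
      have "kap / 4 \<le> knp / 2" using knp by (simp add: kap_def)
      then show ?thesis by (intro mult_right_mono) auto
    qed
    ultimately show ?thesis by (simp add: algebra_simps)
  qed
  also have "kap / 4 * ((\<Sum>e\<in>UNIV. (u e)^2) + Zi^2 + Zj^2) \<ge> kap / 4 * (c0 * n^2)"
    using FFb ks knp by (intro mult_left_mono) (auto simp: kap_def)
  finally have B: "ks / 4 * (\<Sum>e\<in>UNIV. (u e)^2) + knp / 2 * (Zi^2 + Zj^2) \<ge> kap / 4 * (c0 * n^2)" .
  have K1': "(12 * M / m0) * n^2 \<le> kap * c0 / 16 * n^2" using K1 by (intro mult_right_mono) (auto simp: kap_def)
  define T where "T = kap * c0 * n^2"
  have T: "kap / 4 * (c0 * n^2) = T / 4" "kap * c0 / 16 * n^2 = T / 16" "kap * c0 * n^2 / 16 = T / 16"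
    "kap * c0 / 8 * n^2 = T / 8" by (simp_all add: T_def)
  have K2': "24 * ks * n^4 / m0^2 \<le> T / 16" using K2 T by (simp add: kap_def)
  show ?thesis using A B K1' K2' unfolding kap_def[symmetric] T by linarith
qed


theorem proposition7:
  fixes lbar :: "3 \<Rightarrow> real" and \<nu>s \<nu>ns \<nu>db :: real
  assumes "lbar 1 > 0" "lbar 2 > 0" "lbar 3 > 0"
    and "lbar 1 < lbar 2 + lbar 3" "lbar 2 < lbar 1 + lbar 3" "lbar 3 < lbar 1 + lbar 2"
    and "\<nu>s > 0" "\<nu>ns > 0" "\<nu>db > 0"
  shows "\<exists>K. \<forall>\<kappa>s \<kappa>np. \<kappa>s > K \<and> \<kappa>np > K \<longrightarrow>
           (\<exists>p. nondeg_local_min (Uhat \<kappa>s \<kappa>np lbar) Qred p \<and>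
                (\<forall>q\<in>Qspace. proj q = p \<longrightarrow>
                    (\<forall>v. v \<noteq> 0 \<longrightarrow> R_total \<nu>s \<nu>ns \<nu>db q v > 0)))"
proof -
  obtain i j k where dis: "distinct [i,j,k]" and lp: "lbar i > 0" "lbar j > 0" "lbar k > 0"
    and tri: "lbar i < lbar j + lbar k" "lbar j < lbar i + lbar k" "lbar k < lbar i + lbar j"
    and mx: "lbar i \<le> lbar k" "lbar j \<le> lbar k"
    using choose_labels[OF assms(1-6)] by blast
  define y0 where "y0 = (lbar i, lbar j, lbar k, 0::real)"
  note cv = center_vals[OF lp tri mx, folded y0_def]
  obtain r where r: "r > 0" and nb: "\<And>y. y \<in> cball y0 r \<Longrightarrow> good y \<and> wi y \<ge> 1/2 \<and> wj y \<ge> 1/2 \<and>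
     Pkz y \<ge> Pkz y0 / 2 \<and> li y \<ge> li y0 / 2 \<and> lj y \<ge> lj y0 / 2 \<and> lk y \<ge> lk y0 / 2"
    using nbhd[OF cv] by blast
  have gdr: "\<And>y. y \<in> cball y0 r \<Longrightarrow> good y" using nb by blast
  obtain M1 where M1: "M1 \<ge> 0" "\<And>y. y \<in> cball y0 r \<Longrightarrow> \<bar>si y\<bar> \<le> M1"
    using bound_on[where f=si, OF gdr c_si] by metis
  obtain M2 where M2: "M2 \<ge> 0" "\<And>y. y \<in> cball y0 r \<Longrightarrow> \<bar>sj y\<bar> \<le> M2"
    using bound_on[where f=sj, OF gdr c_sj] by metis
  obtain M3 where M3: "M3 \<ge> 0" "\<And>y. y \<in> cball y0 r \<Longrightarrow> \<bar>sk y\<bar> \<le> M3"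
    using bound_on[where f=sk, OF gdr c_sk] by metis
  obtain M4 where M4: "M4 \<ge> 0" "\<And>y. y \<in> cball y0 r \<Longrightarrow> \<bar>psi y\<bar> \<le> M4"
    using bound_on[where f=psi, OF gdr c_psi] by metis
  obtain M5 where M5: "M5 \<ge> 0" "\<And>y. y \<in> cball y0 r \<Longrightarrow> \<bar>wi y\<bar> \<le> M5"
    using bound_on[where f=wi, OF gdr c_wi] by metis
  define M where "M = M1 + M2 + M3 + M4 + M5"
  have M0: "M \<ge> 0" using M1 M2 M3 M4 M5 by (simp add: M_def)
  have Mb: "\<And>y. y \<in> cball y0 r \<Longrightarrow> \<bar>si y\<bar> \<le> M \<and> \<bar>sj y\<bar> \<le> M \<and> \<bar>sk y\<bar> \<le> M \<and> \<bar>psi y\<bar> \<le> M \<and> \<bar>wi y\<bar> \<le> M"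
    using M1 M2 M3 M4 M5 unfolding M_def by (smt (verit))
  obtain c0 where c0: "c0 > 0" and FFl: "\<And>y h. y \<in> cball y0 r \<Longrightarrow> FF i j k y h \<ge> c0 * norm h ^ 2"
    using FF_lower[OF dis gdr] r by (metis less_le)
  define P0 where "P0 = Pkz y0 / 2"
  have P0: "P0 > 0" using cv by (simp add: P0_def)
  define m0 where "m0 = min (min (lbar i) (lbar j)) (lbar k) / 2"
  have m0: "m0 > 0" using lp by (simp add: m0_def)
  have lens: "\<And>y. y \<in> cball y0 r \<Longrightarrow> li y \<ge> m0 \<and> lj y \<ge> m0 \<and> lk y \<ge> m0"
    using nb by (fastforce simp: m0_def y0_def li_def lj_def lk_def)
  define K where "K = 1 + 4 * M / r + M / P0 + 192 * M / (m0 * c0)"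
  show ?thesis
  proof (rule exI, intro allI impI)
    fix ks knp :: real
    assume kk: "ks > K \<and> knp > K"
    have Kge: "K \<ge> 1" "K \<ge> 4 * M / r" "K \<ge> M / P0" "K \<ge> 192 * M / (m0 * c0)"
      using M0 r P0 m0 c0 by (auto simp: K_def)
    have a: "4 * M \<le> K * r" using Kge(2) r by (simp add: pos_divide_le_eq)
    have b: "K * r \<le> ks * r" "K * r \<le> knp * r" using kk r by auto
    have ks: "ks > 0" "4 * M \<le> r * ks" and knp: "knp > 0" "4 * M \<le> r * knp"
      using kk Kge a b by (auto simp: mult.commute)
    obtain y where yc: "y \<in> cball y0 r" and fx: "Phi ks knp (lbar i) (lbar j) (lbar k) y = y"
      using fixpoint[of "lbar i" "lbar j" "lbar k" r M ks knp] gdr r Mb ks knp unfolding y0_def by blast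
    show "\<exists>p. nondeg_local_min (Uhat ks knp lbar) Qred p \<and>
                (\<forall>q\<in>Qspace. proj q = p \<longrightarrow> (\<forall>v. v \<noteq> 0 \<longrightarrow> R_total \<nu>s \<nu>ns \<nu>db q v > 0))"
    proof -
      have fst1: "li y = lbar i + si y / ks" using arg_cong[OF fx, of fst] by (simp add: Phi_def li_def)
      have fst2: "lj y = lbar j + sj y / ks" using arg_cong[OF fx, of "\<lambda>x. fst (snd x)"] by (simp add: Phi_def lj_def)
      have fst3: "lk y = lbar k + sk y / ks" using arg_cong[OF fx, of "\<lambda>x. fst (snd (snd x))"] by (simp add: Phi_def lk_def)
      have fst4: "tt y = psi y / knp" using arg_cong[OF fx, of "\<lambda>x. snd (snd (snd x))"] by (simp add: Phi_def tt_def)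
      have yg: "good y" and wh: "wi y \<ge> 1/2" "wj y \<ge> 1/2" and yP: "Pkz y \<ge> P0"
        using nb[OF yc] by (auto simp: P0_def)
      have ylen: "li y \<ge> m0" "lj y \<ge> m0" "lk y \<ge> m0" using lens[OF yc] by auto
      have yM: "\<bar>si y\<bar> \<le> M" "\<bar>sj y\<bar> \<le> M" "\<bar>sk y\<bar> \<le> M" "\<bar>wi y\<bar> \<le> M" using Mb[OF yc] by auto
      have apex: "Pkz y - wi y / knp > 0"
      proof -
        have "M / P0 < knp" using kk Kge by linarith
        then have "M < knp * P0" using P0 by (simp add: divide_less_eq mult.commute)
        then have "M / knp < P0" using knp by (simp add: divide_less_eq mult.commute)
        moreover have "wi y / knp \<le> M / knp" using yM knp by (intro divide_right_mono) auto
        ultimately show ?thesis using yP by linarith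
      qed
      have wpos: "wi y > 0" "wj y > 0" using wh by auto
      define q0 where "q0 = mkconf i j k (0, - wi y / knp) (Pjx y, - wi y / knp + Pjz y) (Pkx y, - wi y / knp + Pkz y)"
      note MF = mk_fixed[OF dis yg fst1 fst2 fst3 fst4 ks(1) knp(1) apex wpos, folded q0_def]
      define p where "p = proj q0"
      have lp: "lift_section p = q0" unfolding p_def q0_def by (rule lift_proj) (rule mk_x1)
      have sp: "snd p = snd q0" by (simp add: p_def proj_def)
      have elq: "ell q0 e \<ge> m0" for e
      proof -
        have "e = i \<or> e = j \<or> e = k" using UNIV3_dist[OF dis] by auto
        then show ?thesis using MF(1-3) ylen by auto
      qed
      have elnz: "ell q0 e \<noteq> 0" for e using elq[of e] m0 by linarith
      have zq: "snd q0 $ i < 0" "snd q0 $ j < 0" "snd q0 $ k > 0" using MF(4-6) wpos knp apex by auto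
      have zqv: "snd q0 $ v \<noteq> 0" for v
      proof -
        have "v = i \<or> v = j \<or> v = k" using UNIV3_dist[OF dis] by auto
        then show ?thesis using zq by auto
      qed
      have zij: "snd q0 $ i \<le> - 1 / (2 * knp)" "snd q0 $ j \<le> - 1 / (2 * knp)"
        using MF(4,5) wh knp by (auto simp: divide_le_eq field_simps)
      define kap where "kap = min ks knp"
      have kap: "kap > 0" using ks knp by (simp add: kap_def)
      define del where "del = min (min (m0 / 4) (1 / (4 * knp))) (sqrt (kap * c0 * m0^2 / (384 * ks)))"
      have del0: "del > 0" using m0 knp kap c0 ks by (simp add: del_def)
      have delb: "del \<le> m0 / 4" "del \<le> 1 / (4 * knp)" by (auto simp: del_def min_le_iff_disj)
      have "del \<le> sqrt (kap * c0 * m0^2 / (384 * ks))" by (simp add: del_def)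
      then have "del^2 \<le> (sqrt (kap * c0 * m0^2 / (384 * ks)))^2" using del0 by (intro power_mono) auto
      also have "\<dots> = kap * c0 * m0^2 / (384 * ks)" using kap c0 ks by simp
      finally have delb3: "del^2 \<le> kap * c0 * m0^2 / (384 * ks)" .
      define S where "S = ball p del"
      have ellS: "ell (lift_section y') e \<ge> m0 / 2" if "y' \<in> S" for y' e
      proof -
        have nh: "norm (y' - p) < del" using that by (simp add: S_def dist_norm norm_minus_commute)
        have ly: "lift_section y' = q0 + lift_section (y' - p)" using lift_add[of p "y' - p"] lp by simp
        have "norm (dp q0 e) - norm (dp (lift_section (y' - p)) e) \<le> norm (dp q0 e + dp (lift_section (y' - p)) e)"
          by (metis norm_diff_ineq norm_minus_cancel diff_minus_eq_add)
        moreover have "norm (dp (lift_section (y' - p)) e) \<le> m0 / 2"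
          using dp_lift_le[of "y' - p" e] nh delb by linarith
        ultimately show ?thesis using elq[of e] ly by (simp add: ell_dp dp_add)
      qed
      have ellS0: "ell (lift_section y') e \<noteq> 0" if "y' \<in> S" for y' e
        using ellS[OF that, of e] m0 by linarith
      have growth: "Uhat ks knp lbar y' - Uhat ks knp lbar p \<ge> kap * c0 / 8 * norm (y' - p) ^ 2" if "y' \<in> S" for y'
      proof -
        define h where "h = y' - p"
        define w where "w = lift_section h"
        have nh: "norm h < del" using that by (simp add: S_def h_def dist_norm norm_minus_commute)
        have ly: "lift_section y' = q0 + w" using lift_add[of p h] lp by (simp add: h_def w_def)
        have Ueq: "Uhat ks knp lbar y' - Uhat ks knp lbar p = U ks knp lbar (q0 + w) - U ks knp lbar q0"
          by (simp add: Uhat_def ly lp)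
        have el0: "\<And>e. ell q0 e > 0" using elq m0 by (smt (verit))
        have C: "snd q0 $ v < 0 \<and> snd q0 $ v + snd w $ v < 0" if v: "v \<in> {i,j}" for v
        proof -
          have "\<bar>snd w $ v\<bar> \<le> norm h" using ZZ_le[of h v] by (simp add: w_def lift_snd)
          then have a: "snd w $ v < 1 / (4 * knp)" using nh delb(2) by linarith
          have b: "snd q0 $ v \<le> - 1 / (2 * knp)" using zij v by auto
          have c: "- 1 / (2 * knp) + 1 / (4 * knp) < 0" using knp by (simp add: field_simps)
          show ?thesis using zq v a b c by auto
        qed
        have sm: "2 * norm (dp w e) \<le> ell q0 e" for e
          using dp_lift_le[of h e] nh delb(1) elq[of e] unfolding w_def by linarith
        have G: "U ks knp lbar (q0 + w) - U ks knp lbar q0 \<ge>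
          (\<Sum>e\<in>UNIV. - \<bar>ks * (ell q0 e - lbar e)\<bar> * (norm (dp w e)^2 / ell q0 e) - ks / 2 * (norm (dp w e)^2 / ell q0 e)^2
             + ks / 4 * ((dp q0 e \<bullet> dp w e) / ell q0 e)^2)
          + knp / 2 * (\<Sum>v\<in>{i,j}. (snd w $ v)^2)"
          using growth_conf[where C="{i,j}" and w=w, OF MF(7) el0 _ _ C sm] ks knp by auto
        have Cs: "(\<Sum>v\<in>{i,j}. (snd w $ v)^2) = (snd w $ i)^2 + (snd w $ j)^2" using dis by simp
        have sb: "\<bar>ks * (ell q0 e - lbar e)\<bar> \<le> M" for e
        proof -
          have "e = i \<or> e = j \<or> e = k" using UNIV3_dist[OF dis] by auto
          moreover have "ks * (li y - lbar i) = si y" "ks * (lj y - lbar j) = sj y" "ks * (lk y - lbar k) = sk y"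
            using fst1 fst2 fst3 ks by (simp_all add: field_simps)
          ultimately show ?thesis using MF(1-3) yM by auto
        qed
        have Bb: "0 \<le> norm (dp w e)^2 / ell q0 e \<and> norm (dp w e)^2 / ell q0 e \<le> 4 * (norm h)^2 / m0" for e
        proof
          show "0 \<le> norm (dp w e)^2 / ell q0 e" using el0[of e] by simp
          have "norm (dp w e)^2 \<le> (2 * norm h)^2" using dp_lift_le[of h e] unfolding w_def
            by (intro power_mono) auto
          then have "norm (dp w e)^2 \<le> 4 * (norm h)^2" by (simp add: power_mult_distrib)
          then have "norm (dp w e)^2 / ell q0 e \<le> 4 * (norm h)^2 / ell q0 e" using el0[of e] by (intro divide_right_mono) auto
          also have "\<dots> \<le> 4 * (norm h)^2 / m0" using elq[of e] m0 by (intro divide_left_mono) auto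
          finally show "norm (dp w e)^2 / ell q0 e \<le> 4 * (norm h)^2 / m0" .
        qed
        have FFb: "(\<Sum>e\<in>UNIV. ((dp q0 e \<bullet> dp w e) / ell q0 e)^2) + (snd w $ i)^2 + (snd w $ j)^2 \<ge> c0 * (norm h)^2"
          using FF_ident[OF dis q0_def MF(1) MF(2) MF(3), of h] FFl[OF yc, of h] unfolding w_def by simp
        have kapK: "kap > K" using kk by (simp add: kap_def)
        have K1: "12 * M / m0 \<le> min ks knp * c0 / 16"
        proof -
          have "192 * M / (m0 * c0) < kap" using kapK Kge by linarith
          then have "192 * M < kap * (m0 * c0)" using m0 c0 by (simp add: divide_less_eq)
          then show ?thesis using m0 by (simp add: kap_def[symmetric] divide_le_eq field_simps)
        qed
        have K2: "24 * ks * (norm h)^4 / m0^2 \<le> min ks knp * c0 * (norm h)^2 / 16"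
        proof -
          have "(norm h)^2 \<le> del^2" using nh by (intro power_mono) auto
          then have "(norm h)^2 \<le> kap * c0 * m0^2 / (384 * ks)" using delb3 by linarith
          then have "384 * ks * (norm h)^2 \<le> kap * c0 * m0^2" using ks by (simp add: le_divide_eq mult.commute)
          then have "24 * ks * (norm h)^2 / m0^2 \<le> kap * c0 / 16" using m0 by (simp add: divide_le_eq)
          then have "24 * ks * (norm h)^2 / m0^2 * (norm h)^2 \<le> kap * c0 / 16 * (norm h)^2"
            by (intro mult_right_mono) auto
          then show ?thesis by (simp add: kap_def[symmetric] power4_eq_xxxx power2_eq_square field_simps)
        qed
        have GB: "(\<Sum>e\<in>(UNIV::3 set). - \<bar>ks * (ell q0 e - lbar e)\<bar> * (norm (dp w e)^2 / ell q0 e) - ks / 2 * (norm (dp w e)^2 / ell q0 e)^2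
             + ks / 4 * ((dp q0 e \<bullet> dp w e) / ell q0 e)^2) + knp / 2 * ((snd w $ i)^2 + (snd w $ j)^2)
            \<ge> min ks knp * c0 / 8 * (norm h)^2"
          by (rule growth_bound[OF ks(1) knp(1) m0 c0 M0 sb Bb FFb K1 K2])
        show ?thesis using Ueq G[unfolded Cs] GB unfolding h_def[symmetric] kap_def by linarith
      qed
      have nd: "nondeg_local_min (Uhat ks knp lbar) Qred p"
      proof (rule nondeg_from_growth[where S=S and g="gradU ks knp lbar" and \<gamma>="kap * c0 / 8"])
        show "open S" by (simp add: S_def)
        show "p \<in> S" using del0 by (simp add: S_def)
        show "S \<subseteq> Qred"
        proof
          fix y' assume "y' \<in> S"
          then have "lift_section y' \<in> Qspace" using ellS0 by (intro Qspace_of_ell) blast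
          then show "y' \<in> Qred" unfolding Qred_def by (metis proj_lift image_eqI)
        qed
        show "\<And>y'. y' \<in> S \<Longrightarrow> (Uhat ks knp lbar has_derivative (\<lambda>h. gradU ks knp lbar y' \<bullet> h)) (at y')"
          using ellS0 by (intro Uhat_grad) blast
        show "gradU ks knp lbar differentiable (at p)"
          by (intro grad_diff) (simp_all add: lp sp elnz zqv)
        show "gradU ks knp lbar p = 0"
        proof -
          have "DU ks knp lbar q0 w = 0" for w using MF(7) unfolding FB_def DU_def by blast
          then show ?thesis by (simp add: gradU_def lp)
        qed
        show "kap * c0 / 8 > 0" using kap c0 by simp
        show "\<And>y'. y' \<in> S \<Longrightarrow> Uhat ks knp lbar y' - Uhat ks knp lbar p \<ge> kap * c0 / 8 * norm (y' - p) ^ 2"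
          by (rule growth)
      qed
      have Rp': "R_total \<nu>s \<nu>ns \<nu>db q v > 0" if q: "q \<in> Qspace" "proj q = p" and v: "v \<noteq> 0" for q v :: config
      proof -
        have pq: "proj q = proj q0" using q by (simp add: p_def)
        have sq: "snd q = snd q0" using pq by (simp add: proj_def)
        have d1: "pos q i - pos q k = pos q0 i - pos q0 k" and d2: "pos q j - pos q k = pos q0 j - pos q0 k"
          using proj_diff[OF pq] by auto
        have e1: "pos q0 i - pos q0 k = (- Pkx y, - Pkz y)" and e2: "pos q0 j - pos q0 k = (Pjx y - Pkx y, Pjz y - Pkz y)"
          using pos_mk(2,3)[OF dis] by (simp_all add: q0_def)
        have gl: "li y > 0" "lj y > 0" "dt y \<noteq> 0" using yg by (auto simp: good_def)
        have det: "Pkx y * (Pkz y - Pjz y) - Pkz y * (Pkx y - Pjx y) = lj y * li y * dt y"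
          using gl by (simp add: dt_def Ax_def Az_def Bx_def Bz_def field_simps)
        have cr: "fst (pos q i - pos q k) * snd (pos q j - pos q k) - snd (pos q i - pos q k) * fst (pos q j - pos q k) \<noteq> 0"
          unfolding d1 d2 e1 e2 using det gl by (simp add: algebra_simps)
        show ?thesis
          by (rule R_pos[OF dis _ _ cr assms(7-9) v]) (use zq sq in auto)
      qed
      have Rp: "\<forall>q\<in>Qspace. proj q = p \<longrightarrow> (\<forall>v. v \<noteq> 0 \<longrightarrow> R_total \<nu>s \<nu>ns \<nu>db q v > 0)"
        using Rp' by blast
      show ?thesis using nd Rp by blast
    qed
  qed
qed


end
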